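(* In the setting of the context, for every integer $k\ge 2$, \[ \lim_{N\to\infty}M_{2k}(N)\;<\;(2k-1)!!, \] where $(2k-1)!!=(2k-1)(2k-3)\cdots 3\cdot1$ is the $2k$-th moment of the standard Gaussian.
   Context: Let $p$ be a probability density on $\mathbb{R}$ with mean $0$, variance $1$ and finite moments of all orders. For $N\ge 1$, let $b_1,\dots,b_{N-1}$ be independent random variables with density $p$, set $b_0=0$, and let $A=A_N$ be the $N\times N$ real symmetric Toeplitz matrix with entries $a_{ij}=b_{|i-j|}$ ($1\le i,j\le N$). Let $\lambda_1(A),\dots,\lambda_N(A)$ be its eigenvalues. For an integer $k\ge 0$ define $M_k(A,N)=N^{-(k/2+1)}\sum_{i=1}^N\lambda_i(A)^k = N^{-(k/2+1)}\,\mathrm{Trace}(A^k)$, and $M_k(N)=\mathbb{E}[M_k(A,N)]$, the expectation over the random entries. The limit $\lim_{N\to\infty}M_{2k}(N)$ exists. *)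

theory Defs
  imports "HOL-Probability.Probability" "Jordan_Normal_Form.Matrix"
begin

definition mat_trace :: "real mat \<Rightarrow> real" where
  "mat_trace A = (\<Sum>i<dim_row A. A $$ (i, i))"

definition toeplitz_mat :: "(nat \<Rightarrow> 'a \<Rightarrow> real) \<Rightarrow> nat \<Rightarrow> 'a \<Rightarrow> real mat" where
  "toeplitz_mat X N \<omega> =
     mat N N (\<lambda>(i, j). let d = (if i \<le> j then j - i else i - j) in
                        if d = 0 then 0 else X d \<omega>)"

definition moment_AN :: "(nat \<Rightarrow> 'a \<Rightarrow> real) \<Rightarrow> nat \<Rightarrow> nat \<Rightarrow> 'a \<Rightarrow> real" where
  "moment_AN X k N \<omega> =
     real N powr (-(real k / 2 + 1)) * mat_trace (toeplitz_mat X N \<omega> ^\<^sub>m k)"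

definition moment_N :: "'a measure \<Rightarrow> (nat \<Rightarrow> 'a \<Rightarrow> real) \<Rightarrow> nat \<Rightarrow> nat \<Rightarrow> real" where
  "moment_N M X k N = integral\<^sup>L M (moment_AN X k N)"

definition odd_double_fact :: "nat \<Rightarrow> nat" where
  "odd_double_fact k = (\<Prod>i<k. 2 * i + 1)"

end

theory Submission
  imports Defs
begin


lemma hyper_count:
  fixes G :: "(nat \<Rightarrow> int) \<Rightarrow> int"
  assumes fI: "finite I" and iI: "i \<in> I" and fS: "finite S"
    and nd: "\<And>z z'. (\<forall>j\<in>I-{i}. z j = z' j) \<Longrightarrow> G z = G z' \<Longrightarrow> z i = z' i"
  shows "card {z \<in> PiE I (\<lambda>_. S). G z = c} \<le> card S ^ (card I - 1)"
proof -
  let ?A = "{z \<in> PiE I (\<lambda>_. S). G z = c}"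
  have inj: "inj_on (\<lambda>z. restrict z (I - {i})) ?A"
  proof (rule inj_onI)
    fix z z' assume z: "z \<in> ?A" and z': "z' \<in> ?A" and eq: "restrict z (I - {i}) = restrict z' (I - {i})"
    have agree: "\<forall>j\<in>I-{i}. z j = z' j" using eq by (metis restrict_apply')
    have "z i = z' i" using nd[OF agree] z z' by simp
    with agree have a2: "\<And>j. j \<in> I \<Longrightarrow> z j = z' j" by blast
    have "z \<in> PiE I (\<lambda>_. S)" "z' \<in> PiE I (\<lambda>_. S)" using z z' by auto
    from PiE_ext[OF this a2] show "z = z'" .
  qed
  have sub: "(\<lambda>z. restrict z (I - {i})) ` ?A \<subseteq> PiE (I - {i}) (\<lambda>_. S)" by (force simp: PiE_iff)
  have "card ?A = card ((\<lambda>z. restrict z (I - {i})) ` ?A)" using card_image[OF inj] by simp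
  also have "\<dots> \<le> card (PiE (I - {i}) (\<lambda>_. S))"
    by (rule card_mono[OF _ sub]) (simp add: finite_PiE fI fS)
  also have "\<dots> = card S ^ card (I - {i})" by (simp add: card_PiE fI)
  also have "card (I - {i}) = card I - 1" using fI iI by simp
  finally show ?thesis .
qed

lemma abs_PiE:
  assumes "\<And>i. i \<in> I \<Longrightarrow> \<bar>f i\<bar> \<le> (c::int)" "f \<in> extensional I"
  shows "f \<in> PiE I (\<lambda>_. {-c..c})"
proof -
  have "f i \<in> {-c..c}" if "i \<in> I" for i
    using abs_le_D1[OF assms(1)[OF that]] abs_le_D2[OF assms(1)[OF that]] by simp
  then show ?thesis using assms(2) by (auto simp: PiE_iff)
qed

locale lcount =
  fixes I :: "nat set" and T :: "'t set" and L :: "'t \<Rightarrow> (nat \<Rightarrow> int) \<Rightarrow> int" and K B :: int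
  assumes finI: "finite I" and neI: "I \<noteq> {}" and finT: "finite T"
  and loc: "\<And>t z z'. t \<in> T \<Longrightarrow> (\<And>i. i \<in> I \<Longrightarrow> z i = z' i) \<Longrightarrow> L t z = L t z'"
  and lin: "\<And>t m w r. t \<in> T \<Longrightarrow> L t (\<lambda>i. m * w i + r i) = m * L t w + L t r"
  and bnd: "\<And>t r R. t \<in> T \<Longrightarrow> (\<And>i. i \<in> I \<Longrightarrow> \<bar>r i\<bar> \<le> R) \<Longrightarrow> \<bar>L t r\<bar> \<le> K * R"
  and coord: "\<And>z R i. (\<And>t. t \<in> T \<Longrightarrow> \<bar>L t z\<bar> \<le> R) \<Longrightarrow> i \<in> I \<Longrightarrow> \<bar>z i\<bar> \<le> B * R"
  and nondeg: "\<And>t. t \<in> T \<Longrightarrow> \<exists>i\<in>I. \<forall>z z'. (\<forall>j\<in>I-{i}. z j = z' j) \<longrightarrow> L t z = L t z' \<longrightarrow> z i = z' i"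
  and Kpos: "K \<ge> 0" and Bpos: "B \<ge> 0"
begin

definition Q :: "nat \<Rightarrow> (nat \<Rightarrow> int) set" where
  "Q N = {z \<in> PiE I (\<lambda>_. {-(B*int N)..B*int N}). \<forall>t\<in>T. 0 \<le> L t z \<and> L t z < int N}"

definition Ext :: "nat \<Rightarrow> (nat \<Rightarrow> int) set" where
  "Ext N = {w \<in> PiE I (\<lambda>_. {-(B*(int N+K))..B*(int N+K)}). \<forall>t\<in>T. -K \<le> L t w \<and> L t w < int N + K}"

definition Inn :: "nat \<Rightarrow> (nat \<Rightarrow> int) set" where
  "Inn N = {w \<in> Q N. \<forall>t\<in>T. K \<le> L t w \<and> L t w < int N - K}"

definition comb :: "int \<Rightarrow> (nat \<Rightarrow> int) \<times> (nat \<Rightarrow> int) \<Rightarrow> nat \<Rightarrow> int" where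
  "comb m p = (\<lambda>i. if i \<in> I then m * fst p i + snd p i else undefined)"

lemma L_comb: "t \<in> T \<Longrightarrow> L t (comb m (w, r)) = m * L t w + L t r"
  by (subst loc[of t _ "\<lambda>i. m * w i + r i"]) (auto simp: comb_def lin)

lemma finite_Q: "finite (Q N)" unfolding Q_def
  by (rule finite_subset[of _ "PiE I (\<lambda>_. {-(B*int N)..B*int N})"]) (auto intro: finite_PiE finI)
lemma finite_Ext: "finite (Ext N)" unfolding Ext_def
  by (rule finite_subset[of _ "PiE I (\<lambda>_. {-(B*(int N+K))..B*(int N+K)})"]) (auto intro: finite_PiE finI)

lemma Inn_sub: "Inn N \<subseteq> Q N" unfolding Inn_def by auto
lemma Q_sub: "Q N \<subseteq> Ext N"
proof
  fix z assume z: "z \<in> Q N"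
  have b: "B * int N \<le> B * (int N + K)" using Kpos Bpos by (simp add: mult_left_mono)
  show "z \<in> Ext N" using z b Kpos unfolding Q_def Ext_def by (force simp: PiE_iff)
qed

lemma bnd_R: "t \<in> T \<Longrightarrow> r \<in> PiE I (\<lambda>_. {0..<m}) \<Longrightarrow> \<bar>L t r\<bar> \<le> K * m"
  by (rule bnd) (auto simp: PiE_iff)

lemma comb_inj: "m > 0 \<Longrightarrow> inj_on (comb m) (PiE I (\<lambda>_. UNIV) \<times> PiE I (\<lambda>_. {0..<m}))"
proof (rule inj_onI, clarify)
  fix w r w' r' assume m: "m > 0" and w: "w \<in> PiE I (\<lambda>_. UNIV)" and r: "r \<in> PiE I (\<lambda>_. {0..<m})"
    and w': "w' \<in> PiE I (\<lambda>_. UNIV)" and r': "r' \<in> PiE I (\<lambda>_. {0..<m})"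
    and eq: "comb m (w, r) = comb m (w', r')"
  have "\<forall>i\<in>I. w i = w' i \<and> r i = r' i"
  proof
    fix i assume i: "i \<in> I"
    have e: "m * w i + r i = m * w' i + r' i" using fun_cong[OF eq, of i] i by (simp add: comb_def)
    have ri: "0 \<le> r i" "r i < m" "0 \<le> r' i" "r' i < m" using r r' i by (auto simp: PiE_iff)
    have "(m * w i + r i) div m = w i" using ri m by simp
    moreover have "(m * w' i + r' i) div m = w' i" using ri m by simp
    ultimately have "w i = w' i" using e by simp
    then show "w i = w' i \<and> r i = r' i" using e by simp
  qed
  then show "w = w' \<and> r = r'" using PiE_ext[OF w w'] PiE_ext[OF r r'] by blast
qed

lemma lower: assumes m: "m > 0" shows "card (Inn N) * m ^ card I \<le> card (Q (m * N))"
proof -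
  let ?R = "PiE I (\<lambda>_. {0..<int m})"
  have sub: "comb (int m) ` (Inn N \<times> ?R) \<subseteq> Q (m * N)"
  proof clarify
    fix w r assume w: "w \<in> Inn N" and r: "r \<in> ?R"
    have LL: "\<And>t. t \<in> T \<Longrightarrow> 0 \<le> L t (comb (int m) (w, r)) \<and> L t (comb (int m) (w, r)) < int (m * N)"
    proof -
      fix t assume t: "t \<in> T"
      have a: "K \<le> L t w" "L t w \<le> int N - K - 1" using w t by (auto simp: Inn_def)
      have b: "\<bar>L t r\<bar> \<le> int m * K" using bnd_R[OF t r] by (simp add: mult.commute)
      have b1: "L t r \<le> int m * K" "- (int m * K) \<le> L t r" using b by linarith+
      have c: "int m * K \<le> int m * L t w" using a(1) by (simp add: mult_left_mono)
      have d: "int m * L t w \<le> int m * (int N - K - 1)" using a(2) by (simp add: mult_left_mono)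
      have d': "int m * (int N - K - 1) = int m * int N - int m * K - int m" by (simp add: algebra_simps)
      have e: "int (m * N) = int m * int N" by simp
      show "0 \<le> L t (comb (int m) (w, r)) \<and> L t (comb (int m) (w, r)) < int (m * N)"
        unfolding L_comb[OF t] e using b1 c d d' m by linarith
    qed
    have "comb (int m) (w, r) \<in> PiE I (\<lambda>_. {-(B*int (m*N))..B*int (m*N)})"
    proof -
      have "\<And>i. i \<in> I \<Longrightarrow> \<bar>comb (int m) (w, r) i\<bar> \<le> B * int (m * N)"
        by (rule coord) (use LL in fastforce)
      then show ?thesis by (intro abs_PiE) (auto simp: comb_def extensional_def)
    qed
    with LL show "comb (int m) (w, r) \<in> Q (m * N)" by (auto simp: Q_def)
  qed
  have inj: "inj_on (comb (int m)) (Inn N \<times> ?R)"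
    by (rule inj_on_subset[OF comb_inj]) (use m in \<open>auto simp: Inn_def Q_def PiE_iff extensional_def\<close>)
  have "card (Inn N) * m ^ card I = card (Inn N \<times> ?R)"
    by (simp add: card_cartesian_product card_PiE finI)
  also have "\<dots> = card (comb (int m) ` (Inn N \<times> ?R))" by (simp add: card_image[OF inj])
  also have "\<dots> \<le> card (Q (m * N))" by (rule card_mono[OF finite_Q sub])
  finally show ?thesis .
qed

lemma upper: assumes m: "m > 0" shows "card (Q (m * N)) \<le> card (Ext N) * m ^ card I"
proof -
  let ?R = "PiE I (\<lambda>_. {0..<int m})"
  have sub: "Q (m * N) \<subseteq> comb (int m) ` (Ext N \<times> ?R)"
  proof
    fix z assume z: "z \<in> Q (m * N)"
    define w where "w = (\<lambda>i. if i \<in> I then z i div int m else undefined)"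
    define r where "r = (\<lambda>i. if i \<in> I then z i mod int m else undefined)"
    have zc: "z = comb (int m) (w, r)"
      using z by (auto simp: comb_def w_def r_def Q_def PiE_iff extensional_def fun_eq_iff)
    have rR: "r \<in> ?R" using m by (auto simp: r_def PiE_iff extensional_def)
    have LL: "\<And>t. t \<in> T \<Longrightarrow> -K \<le> L t w \<and> L t w < int N + K"
    proof -
      fix t assume t: "t \<in> T"
      have a: "0 \<le> L t z" "L t z < int (m * N)" using z t by (auto simp: Q_def)
      have b: "\<bar>L t r\<bar> \<le> K * int m" using bnd_R[OF t rR] .
      have e: "L t z = int m * L t w + L t r" using L_comb[OF t] zc by metis
      have c: "int m * (-K) \<le> int m * L t w" using a b e by (auto simp: algebra_simps abs_le_iff)
      have d: "int m * L t w < int m * (int N + K)" using a b e by (auto simp: algebra_simps abs_le_iff)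
      have mp: "(0::int) < int m" using m by simp
      show "-K \<le> L t w \<and> L t w < int N + K"
        using mult_le_cancel_left_pos[OF mp] mult_less_cancel_left_pos[OF mp] c d by blast
    qed
    have "w \<in> PiE I (\<lambda>_. {-(B*(int N+K))..B*(int N+K)})"
    proof -
      have "\<And>i. i \<in> I \<Longrightarrow> \<bar>w i\<bar> \<le> B * (int N + K)"
        by (rule coord) (use LL Kpos in fastforce)
      then show ?thesis by (intro abs_PiE) (auto simp: w_def extensional_def)
    qed
    with LL have "w \<in> Ext N" by (auto simp: Ext_def)
    with rR zc show "z \<in> comb (int m) ` (Ext N \<times> ?R)" by blast
  qed
  have "card (Q (m * N)) \<le> card (comb (int m) ` (Ext N \<times> ?R))"
    by (rule card_mono[OF _ sub]) (auto intro!: finite_imageI finite_cartesian_product finite_Ext finite_PiE finI)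
  also have "\<dots> \<le> card (Ext N \<times> ?R)" by (rule card_image_le) (auto intro!: finite_cartesian_product finite_Ext finite_PiE finI)
  also have "\<dots> = card (Ext N) * m ^ card I" by (simp add: card_cartesian_product card_PiE finI)
  finally show ?thesis .
qed

lemma band: "Ext N - Inn N \<subseteq> (\<Union>t\<in>T. \<Union>c\<in>{-K..<K} \<union> {int N - K..<int N + K}.
     {w \<in> PiE I (\<lambda>_. {-(B*(int N+K))..B*(int N+K)}). L t w = c})"
proof
  fix w assume w: "w \<in> Ext N - Inn N"
  then have wE: "w \<in> PiE I (\<lambda>_. {-(B*(int N+K))..B*(int N+K)})" "\<And>t. t \<in> T \<Longrightarrow> -K \<le> L t w \<and> L t w < int N + K"
    by (auto simp: Ext_def)
  have "\<exists>t\<in>T. L t w < K \<or> int N - K \<le> L t w"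
  proof (rule ccontr)
    assume "\<not> ?thesis"
    then have h: "\<And>t. t \<in> T \<Longrightarrow> K \<le> L t w \<and> L t w < int N - K" by force
    have h2: "\<And>t. t \<in> T \<Longrightarrow> \<bar>L t w\<bar> \<le> int N" using h Kpos by (force simp: abs_le_iff)
    have "w \<in> PiE I (\<lambda>_. {-(B*int N)..B*int N})"
      by (rule abs_PiE) (use coord[OF h2] wE in \<open>auto simp: PiE_iff\<close>)
    then have "w \<in> Inn N" using h Kpos unfolding Inn_def Q_def by force
    with w show False by blast
  qed
  then obtain t where t: "t \<in> T" "L t w < K \<or> int N - K \<le> L t w" by blast
  have "L t w \<in> {-K..<K} \<union> {int N - K..<int N + K}" using t wE(2)[OF t(1)] by auto
  with t wE show "w \<in> (\<Union>t\<in>T. \<Union>c\<in>{-K..<K} \<union> {int N - K..<int N + K}.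
     {w \<in> PiE I (\<lambda>_. {-(B*(int N+K))..B*(int N+K)}). L t w = c})" by blast
qed

lemma band_card: "card (Ext N - Inn N) \<le> card T * (4 * nat K) * nat (2*B*(int N+K)+1) ^ (card I - 1)"
proof -
  let ?S = "{-(B*(int N+K))..B*(int N+K)}"
  let ?C = "{-K..<K} \<union> {int N - K..<int N + K}"
  have fin: "finite (Ext N - Inn N)" using finite_Ext by auto
  have cS: "card ?S = nat (2*B*(int N+K)+1)" by simp
  have cC: "card ?C \<le> 4 * nat K"
  proof -
    have "card ?C \<le> card {-K..<K} + card {int N - K..<int N + K}" by (rule card_Un_le)
    also have "\<dots> = 4 * nat K" using Kpos by simp
    finally show ?thesis .
  qed
  have each: "card {w \<in> PiE I (\<lambda>_. ?S). L t w = c} \<le> nat (2*B*(int N+K)+1) ^ (card I - 1)" if t: "t \<in> T" for t c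
  proof -
    obtain i where i: "i \<in> I" and nd: "\<forall>z z'. (\<forall>j\<in>I-{i}. z j = z' j) \<longrightarrow> L t z = L t z' \<longrightarrow> z i = z' i"
      using nondeg[OF t] by blast
    show ?thesis using hyper_count[OF finI i, of ?S "L t" c] nd cS by simp
  qed
  have "card (Ext N - Inn N) \<le> card (\<Union>t\<in>T. \<Union>c\<in>?C. {w \<in> PiE I (\<lambda>_. ?S). L t w = c})"
    by (rule card_mono[OF _ band]) (auto intro!: finite_UN_I finT finite_subset[of _ "PiE I (\<lambda>_. ?S)"] finite_PiE finI)
  also have "\<dots> \<le> (\<Sum>t\<in>T. card (\<Union>c\<in>?C. {w \<in> PiE I (\<lambda>_. ?S). L t w = c}))" by (rule card_UN_le[OF finT])
  also have "\<dots> \<le> (\<Sum>t\<in>T. \<Sum>c\<in>?C. card {w \<in> PiE I (\<lambda>_. ?S). L t w = c})"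
    by (intro sum_mono card_UN_le) auto
  also have "\<dots> \<le> (\<Sum>t\<in>T. \<Sum>c\<in>?C. nat (2*B*(int N+K)+1) ^ (card I - 1))"
    by (intro sum_mono each) auto
  also have "\<dots> = card T * (card ?C * nat (2*B*(int N+K)+1) ^ (card I - 1))" by simp
  also have "\<dots> \<le> card T * (4 * nat K * nat (2*B*(int N+K)+1) ^ (card I - 1))"
    using cC by (intro mult_left_mono) auto
  finally show ?thesis by (simp add: mult.assoc)
qed

definition Cn :: nat where "Cn = card T * (4 * nat K) * nat (2*B*(1+K)+1) ^ (card I - 1)"

lemma E_bound: assumes N: "N \<ge> 1" shows "real (card (Ext N - Inn N)) \<le> real Cn * real N ^ (card I - 1)"
proof -
  have "nat (2*B*(int N+K)+1) \<le> nat (2*B*(1+K)+1) * N"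
  proof -
    have bk: "2*B*K \<le> 2*B*K*int N" using mult_left_mono[of 1 "int N" "2*B*K"] N Kpos Bpos by simp
    have "(2*B*(1+K)+1) * int N = 2*B*int N + 2*B*K*int N + int N" by (simp add: algebra_simps)
    then have x: "2*B*(int N+K)+1 \<le> (2*B*(1+K)+1) * int N" using bk N by (simp add: algebra_simps)
    have y: "2*B*(1+K)+1 \<ge> 0" using Kpos Bpos by simp
    have "nat (2*B*(int N+K)+1) \<le> nat ((2*B*(1+K)+1) * int N)" by (rule nat_mono[OF x])
    also have "\<dots> = nat (2*B*(1+K)+1) * N" using y by (simp add: nat_mult_distrib)
    finally show ?thesis .
  qed
  then have "nat (2*B*(int N+K)+1) ^ (card I - 1) \<le> (nat (2*B*(1+K)+1) * N) ^ (card I - 1)" by (rule power_mono) simp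
  then have "card (Ext N - Inn N) \<le> card T * (4 * nat K) * ((nat (2*B*(1+K)+1) * N) ^ (card I - 1))"
    using band_card[of N] by (meson le_trans mult_le_mono2)
  also have "\<dots> = Cn * N ^ (card I - 1)" by (simp add: Cn_def power_mult_distrib)
  finally show ?thesis by (metis of_nat_le_iff of_nat_mult of_nat_power)
qed

definition aa :: "nat \<Rightarrow> real" where "aa N = real (card (Q N)) / real N ^ card I"

lemma scale_step: assumes m: "m \<ge> 1" and N: "N \<ge> 1" shows "\<bar>aa (m*N) - aa N\<bar> \<le> real Cn / real N"
proof -
  define q where "q = card (Q N)"
  define e where "e = card (Ext N - Inn N)"
  define d where "d = card I"
  have "card I > 0" using finI neI by (simp add: card_gt_0_iff)
  then have d1: "d \<ge> 1" unfolding d_def by simp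
  have "Ext N \<subseteq> Q N \<union> (Ext N - Inn N)" using Inn_sub by auto
  then have "card (Ext N) \<le> card (Q N \<union> (Ext N - Inn N))"
    by (rule card_mono[rotated]) (use finite_Q finite_Ext in auto)
  also have "\<dots> \<le> q + e" unfolding q_def e_def by (rule card_Un_le)
  finally have c1: "card (Ext N) \<le> q + e" .
  have "Q N \<subseteq> Inn N \<union> (Ext N - Inn N)" using Q_sub by auto
  then have "q \<le> card (Inn N \<union> (Ext N - Inn N))" unfolding q_def
    by (rule card_mono[rotated]) (intro finite_UnI finite_Diff finite_subset[OF Inn_sub finite_Q] finite_Ext)
  also have "\<dots> \<le> card (Inn N) + e" unfolding e_def by (rule card_Un_le)
  finally have c2: "q \<le> card (Inn N) + e" .
  have up: "real (card (Q (m*N))) \<le> (real q + real e) * real m ^ d"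
  proof -
    have "card (Q (m*N)) \<le> card (Ext N) * m ^ d" using upper[of m N] m unfolding d_def by simp
    also have "\<dots> \<le> (q + e) * m ^ d" using c1 by (rule mult_le_mono1)
    finally have "card (Q (m*N)) \<le> (q + e) * m ^ d" .
    then have "real (card (Q (m*N))) \<le> real ((q + e) * m ^ d)" by (simp only: of_nat_le_iff)
    then show ?thesis by simp
  qed
  have lo: "(real q - real e) * real m ^ d \<le> real (card (Q (m*N)))"
  proof -
    have "card (Inn N) * m ^ d \<le> card (Q (m*N))" using lower[of m N] m unfolding d_def by simp
    then have "real (card (Inn N) * m ^ d) \<le> real (card (Q (m*N)))" by (simp only: of_nat_le_iff)
    then have "real (card (Inn N)) * real m ^ d \<le> real (card (Q (m*N)))" by simp
    moreover have "real q - real e \<le> real (card (Inn N))" using c2 by linarith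
    ultimately show ?thesis using mult_right_mono[of "real q - real e" "real (card (Inn N))" "real m ^ d"] by simp
  qed
  have mpos: "real m ^ d > 0" "real N ^ d > 0" using m N by auto
  have "\<bar>real (card (Q (m*N))) - real q * real m ^ d\<bar> \<le> real e * real m ^ d"
  proof -
    have u: "real (card (Q (m*N))) - real q * real m ^ d \<le> real e * real m ^ d" using up by (simp add: algebra_simps)
    have l: "- (real (card (Q (m*N))) - real q * real m ^ d) \<le> real e * real m ^ d" using lo by (simp add: algebra_simps)
    show ?thesis using u l by (simp only: abs_le_iff)
  qed
  then have "\<bar>real (card (Q (m*N))) - real q * real m ^ d\<bar> / (real m ^ d * real N ^ d) \<le> real e * real m ^ d / (real m ^ d * real N ^ d)"
    using mpos by (intro divide_right_mono) auto
  also have "\<bar>real (card (Q (m*N))) - real q * real m ^ d\<bar> / (real m ^ d * real N ^ d) = \<bar>aa (m*N) - aa N\<bar>"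
  proof -
    have a1: "aa (m*N) = real (card (Q (m*N))) / (real m ^ d * real N ^ d)"
      by (simp add: aa_def d_def power_mult_distrib)
    have a2: "aa N = real q * real m ^ d / (real m ^ d * real N ^ d)"
      using mpos by (simp add: aa_def q_def d_def)
    have "aa (m*N) - aa N = (real (card (Q (m*N))) - real q * real m ^ d) / (real m ^ d * real N ^ d)"
      unfolding a1 a2 by (rule diff_divide_distrib[symmetric])
    then show ?thesis using mpos by (simp add: abs_divide)
  qed
  also have "real e * real m ^ d / (real m ^ d * real N ^ d) = real e / real N ^ d" using mpos by simp
  also have "\<dots> \<le> real Cn * real N ^ (d - 1) / real N ^ d"
    using E_bound[OF N] mpos unfolding e_def d_def by (intro divide_right_mono) auto
  also have "\<dots> = real Cn / real N"
  proof -
    obtain d' where "d = Suc d'" using d1 by (cases d) auto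
    then have "real N ^ d = real N ^ (d - 1) * real N" by simp
    then show ?thesis using mpos N by simp
  qed
  finally show ?thesis .
qed

lemma aa_cauchy_bound: assumes "N \<ge> 1" "M \<ge> 1" shows "\<bar>aa N - aa M\<bar> \<le> real Cn / real N + real Cn / real M"
proof -
  have "\<bar>aa (M*N) - aa N\<bar> \<le> real Cn / real N" by (rule scale_step) (use assms in auto)
  moreover have "\<bar>aa (N*M) - aa M\<bar> \<le> real Cn / real M" by (rule scale_step) (use assms in auto)
  ultimately show ?thesis by (simp add: mult.commute abs_le_iff)
qed

lemma aa_convergent: "convergent aa"
proof (rule real_Cauchy_convergent, rule metric_CauchyI)
  fix e :: real assume e: "e > 0"
  define M0 where "M0 = nat \<lceil>2 * real Cn / e\<rceil> + 1"
  have M01: "M0 \<ge> 1" by (simp add: M0_def)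
  have key: "real Cn / real n < e / 2" if "n \<ge> M0" for n
  proof -
    have "2 * real Cn / e < real M0" unfolding M0_def by linarith
    also have "\<dots> \<le> real n" using that by simp
    finally have "2 * real Cn < e * real n" using e by (simp add: field_simps)
    moreover have "real n > 0" using that M01 by simp
    ultimately show ?thesis by (simp add: field_simps)
  qed
  show "\<exists>M. \<forall>m\<ge>M. \<forall>n\<ge>M. dist (aa m) (aa n) < e"
  proof (intro exI allI impI)
    fix m n assume "m \<ge> M0" "n \<ge> M0"
    then have "\<bar>aa m - aa n\<bar> \<le> real Cn / real m + real Cn / real n" using M01 by (intro aa_cauchy_bound) auto
    moreover have "real Cn / real m < e / 2" by (rule key) fact
    moreover have "real Cn / real n < e / 2" by (rule key) fact
    ultimately show "dist (aa m) (aa n) < e" unfolding dist_real_def by linarith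
  qed
qed

end


definition FN :: "nat \<Rightarrow> nat \<Rightarrow> (nat \<Rightarrow> nat) set" where
  "FN n N = PiE {..<n} (\<lambda>_. {..<N})"

lemma finite_FN: "finite (FN n N)" by (simp add: FN_def finite_PiE)

lemma pow_walk:
  fixes A :: "real mat"
  assumes A: "A \<in> carrier_mat N N" and x: "x < N" and y: "y < N"
  shows "(A ^\<^sub>m n) $$ (x,y) = (\<Sum>f\<in>{f \<in> FN (Suc n) N. f 0 = x \<and> f n = y}. \<Prod>t<n. A $$ (f t, f (Suc t)))"
  using y
proof (induction n arbitrary: y)
  case 0
  have dr: "dim_row A = N" using A by auto
  show ?case
  proof (cases "x = y")
    case True
    have "{f \<in> FN (Suc 0) N. f 0 = x \<and> f 0 = y} = {(\<lambda>i. if i < 1 then x else undefined)}"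
      using True x by (auto simp: FN_def PiE_iff extensional_def fun_eq_iff)
    then show ?thesis using True x 0 dr by simp
  next
    case False
    then have e: "{f \<in> FN (Suc 0) N. f 0 = x \<and> f 0 = y} = {}" by auto
    show ?thesis using False x 0 dr by (simp only: e) simp
  qed
next
  case (Suc n)
  define P where "P f = (\<Prod>t<n. A $$ (f t, f (Suc t)))" for f :: "nat \<Rightarrow> nat"
  define S' where "S' = {f \<in> FN (Suc n) N. f 0 = x}"
  have dims: "dim_row (A ^\<^sub>m n) = N" "dim_col A = N" "dim_row A = N" using A by auto
  have "(A ^\<^sub>m Suc n) $$ (x,y) = (\<Sum>l<N. (A ^\<^sub>m n) $$ (x,l) * A $$ (l,y))"
    using dims x Suc.prems A
    by (simp add: scalar_prod_def row_def col_def lessThan_atLeast0)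
  also have "\<dots> = (\<Sum>l<N. \<Sum>f\<in>{f \<in> S'. f n = l}. P f * A $$ (f n, y))"
  proof (rule sum.cong[OF refl])
    fix l assume l: "l \<in> {..<N}"
    have "(A ^\<^sub>m n) $$ (x,l) * A $$ (l,y) = (\<Sum>f\<in>{f \<in> FN (Suc n) N. f 0 = x \<and> f n = l}. P f) * A $$ (l,y)"
      using Suc.IH[of l] l by (simp add: P_def)
    also have "\<dots> = (\<Sum>f\<in>{f \<in> S'. f n = l}. P f * A $$ (f n, y))"
      by (simp add: sum_distrib_right S'_def conj_assoc)
    finally show "(A ^\<^sub>m n) $$ (x,l) * A $$ (l,y) = (\<Sum>f\<in>{f \<in> S'. f n = l}. P f * A $$ (f n, y))" .
  qed
  also have "\<dots> = (\<Sum>f\<in>S'. P f * A $$ (f n, y))"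
    by (rule sum.group) (auto simp: S'_def FN_def PiE_iff intro: finite_subset[OF _ finite_FN[of "Suc n" N]])
  also have "\<dots> = (\<Sum>h\<in>{f \<in> FN (Suc (Suc n)) N. f 0 = x \<and> f (Suc n) = y}. \<Prod>t<Suc n. A $$ (h t, h (Suc t)))"
  proof (rule sum.reindex_bij_witness[of _ "\<lambda>h. h(Suc n := undefined)" "\<lambda>f. f(Suc n := y)"])
    fix f assume f: "f \<in> S'"
    have "(\<Prod>t<Suc n. A $$ ((f(Suc n := y)) t, (f(Suc n := y)) (Suc t))) = P f * A $$ (f n, y)"
      by (simp add: P_def)
    then show "(\<Prod>t<Suc n. A $$ ((f(Suc n := y)) t, (f(Suc n := y)) (Suc t))) = P f * A $$ (f n, y)" .
  qed (use Suc.prems in \<open>auto simp: S'_def FN_def PiE_iff extensional_def\<close>)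
  finally show ?case .
qed

lemma trace_walk:
  fixes A :: "real mat"
  assumes A: "A \<in> carrier_mat N N" and n: "n \<ge> 1"
  shows "mat_trace (A ^\<^sub>m n) = (\<Sum>f\<in>FN n N. \<Prod>t<n. A $$ (f t, f (Suc t mod n)))"
proof -
  define P where "P f = (\<Prod>t<n. A $$ (f t, f (Suc t)))" for f :: "nat \<Rightarrow> nat"
  have "mat_trace (A ^\<^sub>m n) = (\<Sum>x<N. (A ^\<^sub>m n) $$ (x,x))" using A by (simp add: mat_trace_def)
  also have "\<dots> = (\<Sum>x<N. \<Sum>f\<in>{f \<in> {f \<in> FN (Suc n) N. f n = f 0}. f 0 = x}. P f)"
    by (rule sum.cong[OF refl]) (simp add: pow_walk[OF A] P_def conj_commute, metis)
  also have "\<dots> = (\<Sum>f\<in>{f \<in> FN (Suc n) N. f n = f 0}. P f)"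
    by (rule sum.group) (auto simp: FN_def PiE_iff intro: finite_subset[OF _ finite_FN[of "Suc n" N]])
  also have "\<dots> = (\<Sum>f\<in>FN n N. \<Prod>t<n. A $$ (f t, f (Suc t mod n)))"
  proof (rule sum.reindex_bij_witness[of _ "\<lambda>f. f(n := f 0)" "\<lambda>h. h(n := undefined)"])
    fix f assume f: "f \<in> {f \<in> FN (Suc n) N. f n = f 0}"
    show "(\<Prod>t<n. A $$ ((f(n := undefined)) t, (f(n := undefined)) (Suc t mod n))) = P f"
      unfolding P_def
    proof (rule prod.cong[OF refl])
      fix t assume t: "t \<in> {..<n}"
      show "A $$ ((f(n := undefined)) t, (f(n := undefined)) (Suc t mod n)) = A $$ (f t, f (Suc t))"
        using t f by (cases "Suc t = n") auto
    qed
  qed (use n in \<open>auto simp: FN_def PiE_iff extensional_def\<close>)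
  finally show ?thesis .
qed


definition dd :: "nat \<Rightarrow> nat \<Rightarrow> nat" where "dd i j = (if i \<le> j then j - i else i - j)"

definition mom :: "(real \<Rightarrow> real) \<Rightarrow> nat \<Rightarrow> real" where
  "mom p m = (LINT x|lborel. x ^ m * p x)"

definition dl :: "nat \<Rightarrow> (nat \<Rightarrow> nat) \<Rightarrow> nat \<Rightarrow> nat" where
  "dl n f t = dd (f t) (f (Suc t mod n))"

definition emom :: "(real \<Rightarrow> real) \<Rightarrow> nat \<Rightarrow> (nat \<Rightarrow> nat) \<Rightarrow> real" where
  "emom p n f = (if \<exists>t<n. dl n f t = 0 then 0
     else \<Prod>v\<in>dl n f ` {..<n}. mom p (card {t\<in>{..<n}. dl n f t = v}))"

locale toep = prob_space M for M :: "'a measure" +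
  fixes X :: "nat \<Rightarrow> 'a \<Rightarrow> real" and p :: "real \<Rightarrow> real"
  assumes indep: "indep_vars (\<lambda>_. borel) X {1..}"
  and distr: "\<And>j. j \<ge> 1 \<Longrightarrow> distributed M lborel (X j) (\<lambda>x. ennreal (p x))"
  and pnn: "\<And>x. p x \<ge> 0"
  and pint: "\<And>m::nat. integrable lborel (\<lambda>x. x ^ m * p x)"
begin

lemma X_moment:
  assumes j: "j \<ge> 1"
  shows "integrable M (\<lambda>\<omega>. X j \<omega> ^ m)" "expectation (\<lambda>\<omega>. X j \<omega> ^ m) = mom p m"
proof -
  have D: "distributed M lborel (X j) (\<lambda>x. ennreal (p x))" by (rule distr[OF j])
  have i1: "integrable lborel (\<lambda>x. p x * x ^ m)" using pint[of m] by (simp add: mult.commute)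
  show "integrable M (\<lambda>\<omega>. X j \<omega> ^ m)"
    using distributed_integrable[OF D, of "\<lambda>x. x ^ m"] i1 pnn by simp
  show "expectation (\<lambda>\<omega>. X j \<omega> ^ m) = mom p m"
    using distributed_integral[OF D, of "\<lambda>x. x ^ m"] pnn by (simp add: mom_def mult.commute)
qed

lemma prod_group_pow:
  fixes Y :: "nat \<Rightarrow> real" and g :: "nat \<Rightarrow> nat" and n :: nat
  shows "(\<Prod>t<n. Y (g t)) = (\<Prod>v\<in>g ` {..<n}. Y v ^ card {t\<in>{..<n}. g t = v})"
proof -
  have "(\<Prod>t<n. Y (g t)) = (\<Prod>v\<in>g ` {..<n}. \<Prod>t\<in>{t\<in>{..<n}. g t = v}. Y (g t))"
    by (rule prod.group[symmetric]) auto
  also have "\<dots> = (\<Prod>v\<in>g ` {..<n}. Y v ^ card {t\<in>{..<n}. g t = v})"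
    by (rule prod.cong[OF refl]) simp
  finally show ?thesis .
qed

lemma walk_expectation:
  fixes n :: nat and f :: "nat \<Rightarrow> nat"
  defines "W \<equiv> (\<lambda>\<omega>. \<Prod>t<n. (if dl n f t = 0 then 0 else X (dl n f t) \<omega>))"
  shows "integrable M W \<and> expectation W = emom p n f"
proof (cases "\<exists>t<n. dl n f t = 0")
  case True
  then obtain t where t: "t < n" "dl n f t = 0" by blast
  have "W \<omega> = 0" for \<omega> unfolding W_def by (rule prod_zero) (use t in force)+
  then have "W = (\<lambda>_. 0)" by auto
  then show ?thesis using True by (simp add: emom_def)
next
  case False
  define V where "V = dl n f ` {..<n}"
  define m where "m v = card {t\<in>{..<n}. dl n f t = v}" for v
  have V1: "V \<subseteq> {1..}" using False by (auto simp: V_def)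
  have fV: "finite V" by (simp add: V_def)
  have W: "W = (\<lambda>\<omega>. \<Prod>v\<in>V. X v \<omega> ^ m v)"
  proof
    fix \<omega>
    have "W \<omega> = (\<Prod>t<n. X (dl n f t) \<omega>)" unfolding W_def using False by (intro prod.cong) auto
    also have "\<dots> = (\<Prod>v\<in>V. X v \<omega> ^ m v)" unfolding V_def m_def by (rule prod_group_pow)
    finally show "W \<omega> = (\<Prod>v\<in>V. X v \<omega> ^ m v)" .
  qed
  have ind: "indep_vars (\<lambda>_. borel) (\<lambda>v \<omega>. X v \<omega> ^ m v) V"
    by (rule indep_vars_compose2[where X=X and M'="\<lambda>_. borel"]) (auto intro: indep_vars_subset[OF indep V1])
  have ints: "\<And>v. v \<in> V \<Longrightarrow> integrable M (\<lambda>\<omega>. X v \<omega> ^ m v)" using X_moment V1 by auto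
  have "integrable M W" unfolding W by (rule indep_vars_integrable[OF fV ind ints])
  moreover have "expectation W = (\<Prod>v\<in>V. expectation (\<lambda>\<omega>. X v \<omega> ^ m v))"
    unfolding W by (rule indep_vars_lebesgue_integral[OF fV ind ints])
  moreover have "\<dots> = emom p n f" using False X_moment V1 by (auto simp: emom_def V_def m_def intro!: prod.cong)
  ultimately show ?thesis by simp
qed

lemma toeplitz_walk:
  assumes n: "n \<ge> 1"
  shows "moment_AN X n N \<omega> = real N powr (-(real n / 2 + 1)) *
     (\<Sum>f\<in>FN n N. \<Prod>t<n. (if dl n f t = 0 then 0 else X (dl n f t) \<omega>))"
proof -
  have A: "toeplitz_mat X N \<omega> \<in> carrier_mat N N" by (simp add: toeplitz_mat_def)
  have "mat_trace (toeplitz_mat X N \<omega> ^\<^sub>m n) = (\<Sum>f\<in>FN n N. \<Prod>t<n. toeplitz_mat X N \<omega> $$ (f t, f (Suc t mod n)))"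
    by (rule trace_walk[OF A n])
  also have "\<dots> = (\<Sum>f\<in>FN n N. \<Prod>t<n. (if dl n f t = 0 then 0 else X (dl n f t) \<omega>))"
  proof (intro sum.cong prod.cong refl)
    fix f t assume f: "f \<in> FN n N" and t: "t \<in> {..<n}"
    have "f t < N" "f (Suc t mod n) < N" using f t n by (auto simp: FN_def PiE_iff)
    then show "toeplitz_mat X N \<omega> $$ (f t, f (Suc t mod n)) = (if dl n f t = 0 then 0 else X (dl n f t) \<omega>)"
      by (simp add: toeplitz_mat_def dl_def dd_def Let_def)
  qed
  finally show ?thesis by (simp add: moment_AN_def)
qed

lemma moment_N_eq:
  assumes n: "n \<ge> 1"
  shows "moment_N M X n N = real N powr (-(real n / 2 + 1)) * (\<Sum>f\<in>FN n N. emom p n f)"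
proof -
  define W where "W f \<omega> = (\<Prod>t<n. (if dl n f t = 0 then 0 else X (dl n f t) \<omega>))" for f \<omega>
  have WE: "\<And>f. integrable M (W f) \<and> expectation (W f) = emom p n f"
    unfolding W_def by (rule walk_expectation)
  have "moment_N M X n N = expectation (\<lambda>\<omega>. real N powr (-(real n / 2 + 1)) * (\<Sum>f\<in>FN n N. W f \<omega>))"
  proof -
    have "moment_AN X n N = (\<lambda>\<omega>. real N powr (-(real n / 2 + 1)) * (\<Sum>f\<in>FN n N. W f \<omega>))"
      by (rule ext) (simp only: toeplitz_walk[OF n] W_def)
    then show ?thesis unfolding moment_N_def by simp
  qed
  also have "\<dots> = real N powr (-(real n / 2 + 1)) * expectation (\<lambda>\<omega>. \<Sum>f\<in>FN n N. W f \<omega>)"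
    by (rule integral_mult_right_zero)
  also have "expectation (\<lambda>\<omega>. \<Sum>f\<in>FN n N. W f \<omega>) = (\<Sum>f\<in>FN n N. expectation (W f))"
    by (rule Bochner_Integration.integral_sum) (use WE in auto)
  finally show ?thesis using WE by simp
qed

end


definition sd :: "nat \<Rightarrow> (nat \<Rightarrow> nat) \<Rightarrow> nat \<Rightarrow> int" where
  "sd n f t = int (f (Suc t mod n)) - int (f t)"

lemma dl_sd: "dl n f t = nat \<bar>sd n f t\<bar>"
  by (cases "f t \<le> f (Suc t mod n)") (auto simp: dl_def dd_def sd_def)

lemma dl_eq_iff: "dl n f s = dl n f t \<longleftrightarrow> \<bar>sd n f s\<bar> = \<bar>sd n f t\<bar>"
  by (simp add: dl_sd eq_nat_nat_iff)

lemma dl_0_iff: "dl n f t = 0 \<longleftrightarrow> sd n f t = 0"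
  by (simp add: dl_sd)

definition validpat :: "nat \<Rightarrow> (nat \<Rightarrow> nat) \<Rightarrow> bool" where
  "validpat n \<mu> = (\<forall>t<n. \<mu> t < n \<and> \<mu> (\<mu> t) = \<mu> t)"

definition Pat :: "nat \<Rightarrow> (nat \<Rightarrow> nat) \<Rightarrow> (nat \<Rightarrow> int) \<Rightarrow> nat \<Rightarrow> (nat \<Rightarrow> nat) set" where
  "Pat n \<mu> \<epsilon> N = {g \<in> FN n N. \<forall>t<n. \<mu> t \<noteq> t \<longrightarrow> sd n g t = \<epsilon> t * sd n g (\<mu> t)}"

definition Dp :: "(nat \<Rightarrow> nat) \<Rightarrow> (nat \<Rightarrow> int) \<Rightarrow> nat \<Rightarrow> (nat \<Rightarrow> int) \<Rightarrow> int" where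
  "Dp \<mu> \<epsilon> s z = (if \<mu> s = s then z s else \<epsilon> s * z (\<mu> s))"

definition Lp :: "nat \<Rightarrow> (nat \<Rightarrow> nat) \<Rightarrow> (nat \<Rightarrow> int) \<Rightarrow> nat \<Rightarrow> (nat \<Rightarrow> int) \<Rightarrow> int" where
  "Lp n \<mu> \<epsilon> t z = z n + (\<Sum>s<t. Dp \<mu> \<epsilon> s z)"

definition Ip :: "nat \<Rightarrow> (nat \<Rightarrow> nat) \<Rightarrow> nat set" where
  "Ip n \<mu> = insert n {a. a < n \<and> \<mu> a = a}"

definition Psi :: "nat \<Rightarrow> (nat \<Rightarrow> nat) \<Rightarrow> (nat \<Rightarrow> nat) \<Rightarrow> nat \<Rightarrow> int" where
  "Psi n \<mu> g = (\<lambda>i. if i = n then int (g 0) else if i < n \<and> \<mu> i = i then sd n g i else undefined)"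

lemma finite_Ip: "finite (Ip n \<mu>)" by (simp add: Ip_def)

lemma card_Ip: "card (Ip n \<mu>) = Suc (card {a. a < n \<and> \<mu> a = a})"
  by (simp add: Ip_def)

lemma Dp_Psi:
  assumes v: "validpat n \<mu>" and g: "g \<in> Pat n \<mu> \<epsilon> N" and s: "s < n"
  shows "Dp \<mu> \<epsilon> s (Psi n \<mu> g) = sd n g s"
proof (cases "\<mu> s = s")
  case True then show ?thesis using s by (simp add: Dp_def Psi_def)
next
  case False
  have "\<mu> s < n" "\<mu> (\<mu> s) = \<mu> s" using v s by (auto simp: validpat_def)
  then show ?thesis using False g s by (simp add: Dp_def Psi_def Pat_def)
qed

lemma telescope:
  assumes t: "t < n"
  shows "int (g 0) + (\<Sum>s<t. sd n g s) = int (g t)"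
  using t
proof (induction t)
  case 0 then show ?case by simp
next
  case (Suc t)
  have "Suc t mod n = Suc t" using Suc.prems by simp
  then show ?case using Suc by (simp add: sd_def)
qed

lemma Lp_Psi:
  assumes v: "validpat n \<mu>" and g: "g \<in> Pat n \<mu> \<epsilon> N" and t: "t < n"
  shows "Lp n \<mu> \<epsilon> t (Psi n \<mu> g) = int (g t)"
proof -
  have "Lp n \<mu> \<epsilon> t (Psi n \<mu> g) = int (g 0) + (\<Sum>s<t. sd n g s)"
    unfolding Lp_def using Dp_Psi[OF v g] t by (simp add: Psi_def)
  also have "\<dots> = int (g t)" by (rule telescope[OF t])
  finally show ?thesis .
qed

lemma Psi_inj:
  assumes v: "validpat n \<mu>"
  shows "inj_on (Psi n \<mu>) (Pat n \<mu> \<epsilon> N)"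
proof (rule inj_onI)
  fix g g' assume g: "g \<in> Pat n \<mu> \<epsilon> N" and g': "g' \<in> Pat n \<mu> \<epsilon> N" and e: "Psi n \<mu> g = Psi n \<mu> g'"
  have "\<And>t. t \<in> {..<n} \<Longrightarrow> g t = g' t"
    using Lp_Psi[OF v g] Lp_Psi[OF v g'] e by (metis lessThan_iff of_nat_eq_iff)
  moreover have "g \<in> FN n N" "g' \<in> FN n N" using g g' by (auto simp: Pat_def)
  ultimately show "g = g'" unfolding FN_def by (metis PiE_ext)
qed

lemma Psi_box:
  assumes g: "g \<in> FN n N" and n: "n \<ge> 1"
  shows "Psi n \<mu> g \<in> PiE (Ip n \<mu>) (\<lambda>_. {-int N..int N})"
proof (rule abs_PiE)
  fix i assume i: "i \<in> Ip n \<mu>"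
  have b: "\<And>j. j < n \<Longrightarrow> g j < N" using g by (auto simp: FN_def PiE_iff)
  show "\<bar>Psi n \<mu> g i\<bar> \<le> int N"
  proof (cases "i = n")
    case True then show ?thesis using b[of 0] n by (simp add: Psi_def)
  next
    case False
    then have "i < n" using i by (auto simp: Ip_def)
    moreover have "Suc i mod n < n" using n by simp
    ultimately show ?thesis using False b[of i] b[of "Suc i mod n"] i by (auto simp: Psi_def Ip_def sd_def)
  qed
next
  show "Psi n \<mu> g \<in> extensional (Ip n \<mu>)" by (auto simp: Psi_def Ip_def extensional_def)
qed

lemma Pat_card_hyper:
  fixes G :: "(nat \<Rightarrow> int) \<Rightarrow> int"
  assumes v: "validpat n \<mu>" and n: "n \<ge> 1" and S: "S \<subseteq> Pat n \<mu> \<epsilon> N" and i: "i \<in> Ip n \<mu>"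
    and nd: "\<And>z z'. (\<forall>j\<in>Ip n \<mu> - {i}. z j = z' j) \<Longrightarrow> G z = G z' \<Longrightarrow> z i = z' i"
    and G0: "\<And>g. g \<in> S \<Longrightarrow> G (Psi n \<mu> g) = 0"
  shows "card S \<le> (2 * N + 1) ^ (card (Ip n \<mu>) - 1)"
proof -
  have inj: "inj_on (Psi n \<mu>) S" using Psi_inj[OF v] S by (rule inj_on_subset)
  have sub: "Psi n \<mu> ` S \<subseteq> {z \<in> PiE (Ip n \<mu>) (\<lambda>_. {-int N..int N}). G z = 0}"
  proof (rule image_subsetI)
    fix g assume g: "g \<in> S"
    then have "g \<in> FN n N" using S by (auto simp: Pat_def)
    then show "Psi n \<mu> g \<in> {z \<in> PiE (Ip n \<mu>) (\<lambda>_. {-int N..int N}). G z = 0}"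
      using Psi_box[OF _ n] G0[OF g] by blast
  qed
  have "card S = card (Psi n \<mu> ` S)" using card_image[OF inj] by simp
  also have "\<dots> \<le> card {z \<in> PiE (Ip n \<mu>) (\<lambda>_. {-int N..int N}). G z = 0}"
    by (rule card_mono[OF _ sub]) (rule finite_subset[of _ "PiE (Ip n \<mu>) (\<lambda>_. {-int N..int N})"], auto intro: finite_PiE finite_Ip)
  also have "\<dots> \<le> card {-int N..int N} ^ (card (Ip n \<mu>) - 1)"
    apply (rule hyper_count[of "Ip n \<mu>" i "{-int N..int N}" G])
       apply (rule finite_Ip)
      apply (rule i)
     apply simp
    apply (rule nd)
     apply assumption+
    done
  also have "card {-int N..int N} = 2 * N + 1" by simp
  finally show ?thesis .
qed

lemma Pat_card:
  assumes v: "validpat n \<mu>" and n: "n \<ge> 1" and S: "S \<subseteq> Pat n \<mu> \<epsilon> N"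
  shows "card S \<le> (2 * N + 1) ^ card (Ip n \<mu>)"
proof -
  have inj: "inj_on (Psi n \<mu>) S" using Psi_inj[OF v] S by (rule inj_on_subset)
  have sub: "Psi n \<mu> ` S \<subseteq> PiE (Ip n \<mu>) (\<lambda>_. {-int N..int N})"
  proof (rule image_subsetI)
    fix g assume g: "g \<in> S"
    then have "g \<in> FN n N" using S by (auto simp: Pat_def)
    then show "Psi n \<mu> g \<in> PiE (Ip n \<mu>) (\<lambda>_. {-int N..int N})" using Psi_box[OF _ n] by blast
  qed
  have "card S = card (Psi n \<mu> ` S)" using card_image[OF inj] by simp
  also have "\<dots> \<le> card (PiE (Ip n \<mu>) (\<lambda>_. {-int N..int N}))"
    by (rule card_mono[OF _ sub]) (auto intro: finite_PiE finite_Ip)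
  also have "\<dots> = card {-int N..int N} ^ card (Ip n \<mu>)" by (simp add: card_PiE finite_Ip)
  also have "card {-int N..int N} = 2 * N + 1" by simp
  finally show ?thesis .
qed

lemma closure_sum:
  assumes n: "n \<ge> 1"
  shows "(\<Sum>s<n. sd n g s) = 0"
proof -
  obtain m where m: "n = Suc m" using n by (cases n) auto
  have "(\<Sum>s<n. sd n g s) = (\<Sum>s<m. sd n g s) + sd n g m" by (simp add: m)
  also have "(\<Sum>s<m. sd n g s) = int (g m) - int (g 0)" using telescope[of m n g] m by simp
  also have "sd n g m = int (g 0) - int (g m)" by (simp add: sd_def m)
  finally show ?thesis by simp
qed


definition Inv :: "nat \<Rightarrow> (nat \<Rightarrow> nat) set" where
  "Inv n = {\<sigma>. (\<forall>t<n. \<sigma> t < n \<and> \<sigma> t \<noteq> t \<and> \<sigma> (\<sigma> t) = t) \<and> (\<forall>t. n \<le> t \<longrightarrow> \<sigma> t = t)}"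

definition H :: "nat \<Rightarrow> (nat \<Rightarrow> nat) \<Rightarrow> nat \<Rightarrow> (nat \<Rightarrow> nat) set" where
  "H n \<sigma> N = {f \<in> FN n N. \<forall>t<n. sd n f (\<sigma> t) = - sd n f t}"

definition muS :: "(nat \<Rightarrow> nat) \<Rightarrow> nat \<Rightarrow> nat" where "muS \<sigma> t = min t (\<sigma> t)"
definition epsS :: "(nat \<Rightarrow> nat) \<Rightarrow> nat \<Rightarrow> int" where "epsS \<sigma> t = (if \<sigma> t < t then -1 else 1)"
definition Fst :: "nat \<Rightarrow> (nat \<Rightarrow> nat) \<Rightarrow> nat set" where "Fst n \<sigma> = {a. a < n \<and> a < \<sigma> a}"
definition Snd :: "nat \<Rightarrow> (nat \<Rightarrow> nat) \<Rightarrow> nat set" where "Snd n \<sigma> = {a. a < n \<and> \<sigma> a < a}"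

lemma InvD: assumes "\<sigma> \<in> Inv n" "t < n" shows "\<sigma> t < n" "\<sigma> t \<noteq> t" "\<sigma> (\<sigma> t) = t"
  using assms by (auto simp: Inv_def)

lemma finite_Inv: "finite (Inv n)"
proof -
  have "Inv n \<subseteq> (\<lambda>g t. if t < n then g t else t) ` (PiE {..<n} (\<lambda>_. {..<n}))"
  proof
    fix \<sigma> assume s: "\<sigma> \<in> Inv n"
    have "\<sigma> = (\<lambda>t. if t < n then (restrict \<sigma> {..<n}) t else t)" using s by (auto simp: Inv_def fun_eq_iff)
    moreover have "restrict \<sigma> {..<n} \<in> PiE {..<n} (\<lambda>_. {..<n})" using s by (auto simp: Inv_def)
    ultimately show "\<sigma> \<in> (\<lambda>g t. if t < n then g t else t) ` (PiE {..<n} (\<lambda>_. {..<n}))" by blast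
  qed
  then show ?thesis by (rule finite_subset) (auto intro: finite_PiE)
qed

lemma Fix_muS: "\<sigma> \<in> Inv n \<Longrightarrow> {a. a < n \<and> muS \<sigma> a = a} = Fst n \<sigma>"
  by (auto simp: muS_def Fst_def Inv_def min_def)

lemma validpat_muS: "\<sigma> \<in> Inv n \<Longrightarrow> validpat n (muS \<sigma>)"
  by (auto simp: validpat_def muS_def Inv_def min_def)

lemma H_Pat: assumes s: "\<sigma> \<in> Inv n" shows "H n \<sigma> N = Pat n (muS \<sigma>) (epsS \<sigma>) N"
proof -
  have "(\<forall>t<n. sd n f (\<sigma> t) = - sd n f t) \<longleftrightarrow> (\<forall>t<n. muS \<sigma> t \<noteq> t \<longrightarrow> sd n f t = epsS \<sigma> t * sd n f (muS \<sigma> t))" for f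
  proof
    assume h: "\<forall>t<n. sd n f (\<sigma> t) = - sd n f t"
    show "\<forall>t<n. muS \<sigma> t \<noteq> t \<longrightarrow> sd n f t = epsS \<sigma> t * sd n f (muS \<sigma> t)"
    proof (intro allI impI)
      fix t assume t: "t < n" "muS \<sigma> t \<noteq> t"
      then have lt: "\<sigma> t < t" by (auto simp: muS_def min_def split: if_splits)
      have "sd n f (\<sigma> (\<sigma> t)) = - sd n f (\<sigma> t)" using h InvD[OF s t(1)] by blast
      then show "sd n f t = epsS \<sigma> t * sd n f (muS \<sigma> t)" using lt InvD[OF s t(1)] by (simp add: muS_def epsS_def)
    qed
  next
    assume h: "\<forall>t<n. muS \<sigma> t \<noteq> t \<longrightarrow> sd n f t = epsS \<sigma> t * sd n f (muS \<sigma> t)"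
    show "\<forall>t<n. sd n f (\<sigma> t) = - sd n f t"
    proof (intro allI impI)
      fix t assume t: "t < n"
      show "sd n f (\<sigma> t) = - sd n f t"
      proof (cases "\<sigma> t < t")
        case True
        then show ?thesis using h t by (auto simp: muS_def epsS_def)
      next
        case False
        then have lt: "t < \<sigma> t" using InvD(2)[OF s t] by simp
        have u: "\<sigma> t < n" "\<sigma> (\<sigma> t) = t" using InvD[OF s t] by auto
        then have "muS \<sigma> (\<sigma> t) = t" "muS \<sigma> (\<sigma> t) \<noteq> \<sigma> t" "epsS \<sigma> (\<sigma> t) = -1" using lt by (auto simp: muS_def epsS_def)
        then show ?thesis using h u by force
      qed
    qed
  qed
  then show ?thesis by (auto simp: H_def Pat_def)
qed

lemma Fst_Snd:
  assumes s: "\<sigma> \<in> Inv n"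
  shows "Fst n \<sigma> \<inter> Snd n \<sigma> = {}" "Fst n \<sigma> \<union> Snd n \<sigma> = {..<n}" "bij_betw \<sigma> (Snd n \<sigma>) (Fst n \<sigma>)"
proof -
  show "Fst n \<sigma> \<inter> Snd n \<sigma> = {}" by (auto simp: Fst_def Snd_def)
  show "Fst n \<sigma> \<union> Snd n \<sigma> = {..<n}" using s by (auto simp: Fst_def Snd_def Inv_def)
  show "bij_betw \<sigma> (Snd n \<sigma>) (Fst n \<sigma>)"
  proof (rule bij_betw_byWitness[where f'=\<sigma>])
    show "\<forall>a\<in>Snd n \<sigma>. \<sigma> (\<sigma> a) = a" "\<forall>a'\<in>Fst n \<sigma>. \<sigma> (\<sigma> a') = a'" using s by (auto simp: Fst_def Snd_def Inv_def)
    show "\<sigma> ` Snd n \<sigma> \<subseteq> Fst n \<sigma>" "\<sigma> ` Fst n \<sigma> \<subseteq> Snd n \<sigma>" using s by (auto simp: Fst_def Snd_def Inv_def)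
  qed
qed

lemma card_Fst:
  assumes s: "\<sigma> \<in> Inv (2*k)"
  shows "card (Fst (2*k) \<sigma>) = k"
proof -
  have f: "finite (Fst (2*k) \<sigma>)" "finite (Snd (2*k) \<sigma>)" by (auto simp: Fst_def Snd_def)
  have "card (Snd (2*k) \<sigma>) = card (Fst (2*k) \<sigma>)" using bij_betw_same_card[OF Fst_Snd(3)[OF s]] .
  moreover have "card (Fst (2*k) \<sigma>) + card (Snd (2*k) \<sigma>) = 2*k"
    using card_Un_disjoint[OF f Fst_Snd(1)[OF s]] Fst_Snd(2)[OF s] by simp
  ultimately show ?thesis by simp
qed

lemma pair_closure:
  assumes s: "\<sigma> \<in> Inv n"
  shows "(\<Sum>s<n. Dp (muS \<sigma>) (epsS \<sigma>) s z) = 0"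
proof -
  have f: "finite (Fst n \<sigma>)" "finite (Snd n \<sigma>)" by (auto simp: Fst_def Snd_def)
  have "(\<Sum>s<n. Dp (muS \<sigma>) (epsS \<sigma>) s z) = (\<Sum>s\<in>Fst n \<sigma> \<union> Snd n \<sigma>. Dp (muS \<sigma>) (epsS \<sigma>) s z)"
    using Fst_Snd(2)[OF s] by simp
  also have "\<dots> = (\<Sum>s\<in>Fst n \<sigma>. Dp (muS \<sigma>) (epsS \<sigma>) s z) + (\<Sum>s\<in>Snd n \<sigma>. Dp (muS \<sigma>) (epsS \<sigma>) s z)"
    by (rule sum.union_disjoint[OF f Fst_Snd(1)[OF s]])
  also have "(\<Sum>s\<in>Fst n \<sigma>. Dp (muS \<sigma>) (epsS \<sigma>) s z) = (\<Sum>s\<in>Fst n \<sigma>. z s)"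
    by (rule sum.cong) (auto simp: Dp_def muS_def Fst_def)
  also have "(\<Sum>s\<in>Snd n \<sigma>. Dp (muS \<sigma>) (epsS \<sigma>) s z) = (\<Sum>s\<in>Snd n \<sigma>. - z (\<sigma> s))"
    by (rule sum.cong) (auto simp: Dp_def muS_def epsS_def Snd_def)
  also have "\<dots> = - (\<Sum>s\<in>Snd n \<sigma>. z (\<sigma> s))" by (simp add: sum_negf)
  also have "(\<Sum>s\<in>Snd n \<sigma>. z (\<sigma> s)) = (\<Sum>a\<in>Fst n \<sigma>. z a)"
    by (rule sum.reindex_bij_betw[OF Fst_Snd(3)[OF s]])
  finally show ?thesis by simp
qed

lemma Dp_local:
  assumes s: "\<sigma> \<in> Inv n" and u: "u < n" and ag: "\<And>i. i \<in> Ip n (muS \<sigma>) - {n} \<Longrightarrow> z i = z' i"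
  shows "Dp (muS \<sigma>) (epsS \<sigma>) u z = Dp (muS \<sigma>) (epsS \<sigma>) u z'"
proof -
  have v: "muS \<sigma> u < n" "muS \<sigma> (muS \<sigma> u) = muS \<sigma> u" using validpat_muS[OF s] u by (auto simp: validpat_def)
  show ?thesis using ag v u by (auto simp: Dp_def Ip_def)
qed

lemma pair_lcount:
  assumes s: "\<sigma> \<in> Inv n" and n: "n \<ge> 1"
  shows "lcount (Ip n (muS \<sigma>)) {..<n} (Lp n (muS \<sigma>) (epsS \<sigma>)) (int n) 2"
proof
  let ?\<mu> = "muS \<sigma>" and ?\<epsilon> = "epsS \<sigma>"
  show "finite (Ip n ?\<mu>)" by (rule finite_Ip)
  show "Ip n ?\<mu> \<noteq> {}" by (simp add: Ip_def)
  show "finite {..<n}" by simp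
  show "int n \<ge> 0" "(2::int) \<ge> 0" by auto
  show "Lp n ?\<mu> ?\<epsilon> t z = Lp n ?\<mu> ?\<epsilon> t z'" if t: "t \<in> {..<n}" and ag: "\<And>i. i \<in> Ip n ?\<mu> \<Longrightarrow> z i = z' i" for t z z'
  proof -
    have "Dp ?\<mu> ?\<epsilon> u z = Dp ?\<mu> ?\<epsilon> u z'" if "u < t" for u
      by (rule Dp_local[OF s]) (use that t ag in auto)
    moreover have "z n = z' n" using ag by (simp add: Ip_def)
    ultimately show ?thesis unfolding Lp_def by simp
  qed
  show "Lp n ?\<mu> ?\<epsilon> t (\<lambda>i. m * w i + r i) = m * Lp n ?\<mu> ?\<epsilon> t w + Lp n ?\<mu> ?\<epsilon> t r" for t m w r
  proof -
    have "Dp ?\<mu> ?\<epsilon> u (\<lambda>i. m * w i + r i) = m * Dp ?\<mu> ?\<epsilon> u w + Dp ?\<mu> ?\<epsilon> u r" for u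
      by (simp add: Dp_def algebra_simps)
    then show ?thesis by (simp add: Lp_def sum.distrib sum_distrib_left algebra_simps)
  qed
  show "\<bar>Lp n ?\<mu> ?\<epsilon> t r\<bar> \<le> int n * R" if t: "t \<in> {..<n}" and b: "\<And>i. i \<in> Ip n ?\<mu> \<Longrightarrow> \<bar>r i\<bar> \<le> R" for t r R
  proof -
    have bn: "\<bar>r n\<bar> \<le> R" using b by (simp add: Ip_def)
    have bD: "\<bar>Dp ?\<mu> ?\<epsilon> u r\<bar> \<le> R" if "u < n" for u
    proof -
      have v: "?\<mu> u < n" "?\<mu> (?\<mu> u) = ?\<mu> u" using validpat_muS[OF s] that by (auto simp: validpat_def)
      have "\<bar>r (?\<mu> u)\<bar> \<le> R" using b v by (simp add: Ip_def)
      moreover have "\<bar>r u\<bar> \<le> R" if "?\<mu> u = u" using b \<open>u < n\<close> that by (simp add: Ip_def)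
      ultimately show ?thesis by (auto simp: Dp_def epsS_def abs_mult)
    qed
    have "\<bar>Lp n ?\<mu> ?\<epsilon> t r\<bar> \<le> \<bar>r n\<bar> + (\<Sum>u<t. \<bar>Dp ?\<mu> ?\<epsilon> u r\<bar>)"
      unfolding Lp_def by (rule order.trans[OF abs_triangle_ineq]) (simp add: sum_abs)
    also have "\<dots> \<le> R + (\<Sum>u<t. R)" using bn bD t by (intro add_mono sum_mono) auto
    also have "\<dots> = (1 + int t) * R" by (simp add: algebra_simps)
    also have "\<dots> \<le> int n * R" using t bn by (intro mult_right_mono) auto
    finally show ?thesis .
  qed
  show "\<bar>z i\<bar> \<le> 2 * R" if b: "\<And>t. t \<in> {..<n} \<Longrightarrow> \<bar>Lp n ?\<mu> ?\<epsilon> t z\<bar> \<le> R" and i: "i \<in> Ip n ?\<mu>" for z R i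
  proof -
    have L0: "Lp n ?\<mu> ?\<epsilon> 0 z = z n" by (simp add: Lp_def)
    have R0: "\<bar>z n\<bar> \<le> R" using b[of 0] n L0 by simp
    show ?thesis
    proof (cases "i = n")
      case True then show ?thesis using R0 by simp
    next
      case False
      then have ia: "i < n" "?\<mu> i = i" using i by (auto simp: Ip_def)
      then have "i \<in> Fst n \<sigma>" using Fix_muS[OF s] by blast
      then have "i < \<sigma> i" "\<sigma> i < n" using InvD[OF s] by (auto simp: Fst_def)
      then have si: "Suc i < n" by simp
      have "Lp n ?\<mu> ?\<epsilon> (Suc i) z - Lp n ?\<mu> ?\<epsilon> i z = z i" using ia by (simp add: Lp_def Dp_def)
      moreover have "\<bar>Lp n ?\<mu> ?\<epsilon> (Suc i) z\<bar> \<le> R" "\<bar>Lp n ?\<mu> ?\<epsilon> i z\<bar> \<le> R" using b si ia by auto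
      ultimately show ?thesis by linarith
    qed
  qed
  show "\<exists>i\<in>Ip n ?\<mu>. \<forall>z z'. (\<forall>j\<in>Ip n ?\<mu> - {i}. z j = z' j) \<longrightarrow> Lp n ?\<mu> ?\<epsilon> t z = Lp n ?\<mu> ?\<epsilon> t z' \<longrightarrow> z i = z' i"
    if t: "t \<in> {..<n}" for t
  proof (intro bexI[of _ n] allI impI)
    fix z z' assume ag: "\<forall>j\<in>Ip n ?\<mu> - {n}. z j = z' j" and e: "Lp n ?\<mu> ?\<epsilon> t z = Lp n ?\<mu> ?\<epsilon> t z'"
    have "Dp ?\<mu> ?\<epsilon> u z = Dp ?\<mu> ?\<epsilon> u z'" if "u < t" for u
      by (rule Dp_local[OF s]) (use that t ag in auto)
    then have "(\<Sum>u<t. Dp ?\<mu> ?\<epsilon> u z) = (\<Sum>u<t. Dp ?\<mu> ?\<epsilon> u z')" by simp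
    then show "z n = z' n" using e by (simp add: Lp_def)
  qed (simp add: Ip_def)
qed

lemma card_H_Q:
  assumes s: "\<sigma> \<in> Inv n" and n: "n \<ge> 1"
  shows "card (H n \<sigma> N) = card (lcount.Q (Ip n (muS \<sigma>)) {..<n} (Lp n (muS \<sigma>) (epsS \<sigma>)) 2 N)"
proof -
  let ?\<mu> = "muS \<sigma>" and ?\<epsilon> = "epsS \<sigma>"
  let ?L = "Lp n ?\<mu> ?\<epsilon>" and ?I = "Ip n ?\<mu>"
  interpret lc: lcount ?I "{..<n}" ?L "int n" 2 by (rule pair_lcount[OF s n])
  have v: "validpat n ?\<mu>" by (rule validpat_muS[OF s])
  have HP: "H n \<sigma> N = Pat n ?\<mu> ?\<epsilon> N" by (rule H_Pat[OF s])
  have "bij_betw (Psi n ?\<mu>) (H n \<sigma> N) (lc.Q N)"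
  proof (rule bij_betw_imageI)
    show "inj_on (Psi n ?\<mu>) (H n \<sigma> N)" unfolding HP by (rule Psi_inj[OF v])
    show "Psi n ?\<mu> ` H n \<sigma> N = lc.Q N"
    proof
      show "Psi n ?\<mu> ` H n \<sigma> N \<subseteq> lc.Q N"
      proof (rule image_subsetI)
        fix g assume g: "g \<in> H n \<sigma> N"
        then have gP: "g \<in> Pat n ?\<mu> ?\<epsilon> N" and gF: "g \<in> FN n N" using HP by (auto simp: Pat_def)
        have box: "Psi n ?\<mu> g \<in> PiE ?I (\<lambda>_. {-int N..int N})" by (rule Psi_box[OF gF n])
        have "Psi n ?\<mu> g \<in> PiE ?I (\<lambda>_. {-(2*int N)..2*int N})"
          using box by (force simp: PiE_iff)
        moreover have "\<forall>t\<in>{..<n}. 0 \<le> ?L t (Psi n ?\<mu> g) \<and> ?L t (Psi n ?\<mu> g) < int N"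
          using Lp_Psi[OF v gP] gF by (auto simp: FN_def PiE_iff)
        ultimately show "Psi n ?\<mu> g \<in> lc.Q N" by (simp add: lc.Q_def)
      qed
    next
      show "lc.Q N \<subseteq> Psi n ?\<mu> ` H n \<sigma> N"
      proof
        fix z assume z: "z \<in> lc.Q N"
        then have zP: "z \<in> PiE ?I (\<lambda>_. {-(2*int N)..2*int N})" and zL: "\<And>t. t < n \<Longrightarrow> 0 \<le> ?L t z \<and> ?L t z < int N"
          by (auto simp: lc.Q_def)
        define g where "g t = (if t < n then nat (?L t z) else undefined)" for t
        have gt: "int (g t) = ?L t z" if "t < n" for t using zL[OF that] that by (simp add: g_def)
        have "g t < N" if "t < n" for t using zL[OF that] that by (simp add: g_def nat_less_iff)
        then have gF: "g \<in> FN n N" by (auto simp: FN_def g_def PiE_iff extensional_def)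
        have sdD: "sd n g t = Dp ?\<mu> ?\<epsilon> t z" if t: "t < n" for t
        proof (cases "Suc t < n")
          case True
          then show ?thesis using gt[of t] gt[of "Suc t"] t by (simp add: sd_def Lp_def)
        next
          case False
          then have tn: "Suc t = n" using t by simp
          have "(\<Sum>s<n. Dp ?\<mu> ?\<epsilon> s z) = 0" by (rule pair_closure[OF s])
          then have "(\<Sum>s<t. Dp ?\<mu> ?\<epsilon> s z) + Dp ?\<mu> ?\<epsilon> t z = 0" using tn by (metis sum.lessThan_Suc)
          moreover have "sd n g t = ?L 0 z - ?L t z" using gt[of 0] gt[of t] t tn n by (simp add: sd_def)
          ultimately show ?thesis by (simp add: Lp_def)
        qed
        have gP: "g \<in> Pat n ?\<mu> ?\<epsilon> N"
        proof -
          have "sd n g t = ?\<epsilon> t * sd n g (?\<mu> t)" if t: "t < n" "?\<mu> t \<noteq> t" for t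
          proof -
            have vv: "?\<mu> t < n" "?\<mu> (?\<mu> t) = ?\<mu> t" using v t by (auto simp: validpat_def)
            show ?thesis using sdD[OF t(1)] sdD[OF vv(1)] vv t by (simp add: Dp_def)
          qed
          then show ?thesis using gF by (simp add: Pat_def)
        qed
        have "Psi n ?\<mu> g = z"
        proof
          fix i
          show "Psi n ?\<mu> g i = z i"
          proof (cases "i = n")
            case True then show ?thesis using gt[of 0] n by (simp add: Psi_def Lp_def)
          next
            case False
            show ?thesis
            proof (cases "i < n \<and> ?\<mu> i = i")
              case True then show ?thesis using sdD[of i] False by (simp add: Psi_def Dp_def)
            next
              case c: False
              then have "i \<notin> ?I" using False by (simp add: Ip_def)
              then show ?thesis using zP False c by (auto simp: Psi_def PiE_iff extensional_def)
            qed
          qed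
        qed
        then show "z \<in> Psi n ?\<mu> ` H n \<sigma> N" using gP HP by blast
      qed
    qed
  qed
  then show ?thesis by (rule bij_betw_same_card)
qed

lemma H_convergent:
  assumes s: "\<sigma> \<in> Inv (2*k)" and k: "k \<ge> 1"
  shows "convergent (\<lambda>N. real (card (H (2*k) \<sigma> N)) / real N ^ Suc k)"
proof -
  let ?n = "2*k"
  have n: "?n \<ge> 1" using k by simp
  interpret lc: lcount "Ip ?n (muS \<sigma>)" "{..<?n}" "Lp ?n (muS \<sigma>) (epsS \<sigma>)" "int ?n" 2 by (rule pair_lcount[OF s n])
  have cI: "card (Ip ?n (muS \<sigma>)) = Suc k" using card_Ip[of ?n "muS \<sigma>"] Fix_muS[OF s] card_Fst[OF s] by simp
  have "(\<lambda>N. real (card (H (2*k) \<sigma> N)) / real N ^ Suc k) = lc.aa"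
    by (rule ext) (simp add: lc.aa_def card_H_Q[OF s n] cI)
  then show ?thesis using lc.aa_convergent by simp
qed


definition Jset :: "nat \<Rightarrow> (nat \<Rightarrow> nat) \<Rightarrow> nat set" where
  "Jset n \<sigma> = insert 0 (Suc ` Fst n \<sigma>)"

lemma Jset_sub: "\<sigma> \<in> Inv n \<Longrightarrow> n \<ge> 1 \<Longrightarrow> Jset n \<sigma> \<subseteq> {..<n}"
  by (auto simp: Jset_def Fst_def Inv_def)

lemma card_Jset: "card (Jset (2*k) \<sigma>) = Suc k" if "\<sigma> \<in> Inv (2*k)"
proof -
  have "0 \<notin> Suc ` Fst (2*k) \<sigma>" by auto
  moreover have "card (Suc ` Fst (2*k) \<sigma>) = k" using card_Fst[OF that] by (simp add: card_image)
  moreover have "finite (Fst (2*k) \<sigma>)" by (simp add: Fst_def)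
  ultimately show ?thesis by (simp add: Jset_def)
qed

lemma H_det:
  assumes s: "\<sigma> \<in> Inv n" and g: "g \<in> H n \<sigma> N" and g': "g' \<in> H n \<sigma> N"
    and ag: "\<And>j. j \<in> Jset n \<sigma> \<Longrightarrow> g j = g' j"
  shows "t < n \<Longrightarrow> g t = g' t"
proof (induction t rule: less_induct)
  case (less t)
  show ?case
  proof (cases t)
    case 0 then show ?thesis using ag by (simp add: Jset_def)
  next
    case (Suc u)
    have un: "u < n" "Suc u < n" using less.prems Suc by auto
    show ?thesis
    proof (cases "u \<in> Fst n \<sigma>")
      case True then show ?thesis using ag Suc by (simp add: Jset_def)
    next
      case False
      then have lt: "\<sigma> u < u" using InvD[OF s un(1)] un by (auto simp: Fst_def)
      have su: "\<sigma> u < n" "\<sigma> (\<sigma> u) = u" using InvD[OF s un(1)] by auto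
      have hs: "\<And>f. f \<in> H n \<sigma> N \<Longrightarrow> sd n f u = - sd n f (\<sigma> u)"
        using su by (auto simp: H_def)
      have m1: "Suc (\<sigma> u) mod n = Suc (\<sigma> u)" using lt un by simp
      have e1: "g (\<sigma> u) = g' (\<sigma> u)" "g (Suc (\<sigma> u)) = g' (Suc (\<sigma> u))"
        using less.IH lt Suc su un by auto
      have "sd n g (\<sigma> u) = sd n g' (\<sigma> u)" using e1 m1 by (simp add: sd_def)
      then have "sd n g u = sd n g' u" using hs[OF g] hs[OF g'] by simp
      moreover have "g u = g' u" using less.IH Suc un by auto
      ultimately show ?thesis using Suc un by (simp add: sd_def)
    qed
  qed
qed

lemma H_restrict_inj:
  assumes s: "\<sigma> \<in> Inv n"
  shows "inj_on (\<lambda>g. restrict g (Jset n \<sigma>)) (H n \<sigma> N)"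
proof (rule inj_onI)
  fix g g' assume g: "g \<in> H n \<sigma> N" and g': "g' \<in> H n \<sigma> N" and e: "restrict g (Jset n \<sigma>) = restrict g' (Jset n \<sigma>)"
  have "\<And>j. j \<in> Jset n \<sigma> \<Longrightarrow> g j = g' j" using e by (metis restrict_apply')
  then have "\<And>t. t \<in> {..<n} \<Longrightarrow> g t = g' t" using H_det[OF s g g'] by blast
  moreover have "g \<in> FN n N" "g' \<in> FN n N" using g g' by (auto simp: H_def)
  ultimately show "g = g'" unfolding FN_def by (metis PiE_ext)
qed

lemma card_H_le:
  assumes s: "\<sigma> \<in> Inv (2*k)" and k: "k \<ge> 1" and N: "N \<ge> 1"
  shows "card (H (2*k) \<sigma> N) \<le> N ^ Suc k"
proof -
  let ?J = "Jset (2*k) \<sigma>"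
  have sub: "(\<lambda>g. restrict g ?J) ` H (2*k) \<sigma> N \<subseteq> PiE ?J (\<lambda>_. {..<N})"
    using Jset_sub[OF s] k by (force simp: H_def FN_def PiE_iff)
  have "card (H (2*k) \<sigma> N) = card ((\<lambda>g. restrict g ?J) ` H (2*k) \<sigma> N)"
    using card_image[OF H_restrict_inj[OF s]] by simp
  also have "\<dots> \<le> card (PiE ?J (\<lambda>_. {..<N}))"
    by (rule card_mono[OF _ sub]) (auto intro!: finite_PiE simp: Jset_def Fst_def)
  also have "\<dots> = N ^ Suc k" using card_Jset[OF s] by (simp add: card_PiE Jset_def Fst_def)
  finally show ?thesis .
qed


definition sig0 :: "nat \<Rightarrow> nat \<Rightarrow> nat" where
  "sig0 n t = (if t = 0 then 2 else if t = 1 then 3 else if t = 2 then 0 else if t = 3 then 1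
     else if t < n then (if even t then Suc t else t - 1) else t)"

lemma sig0_Inv:
  assumes k: "k \<ge> 2"
  shows "sig0 (2*k) \<in> Inv (2*k)"
proof -
  have "sig0 (2*k) t < 2*k \<and> sig0 (2*k) t \<noteq> t \<and> sig0 (2*k) (sig0 (2*k) t) = t" if t: "t < 2*k" for t
  proof -
    consider "t = 0" | "t = 1" | "t = 2" | "t = 3" | "t \<ge> 4" "even t" | "t \<ge> 4" "odd t" by linarith
    then show ?thesis
    proof cases
      case 5
      then have "Suc t < 2*k" using t by presburger
      then show ?thesis using 5 t by (simp add: sig0_def)
    next
      case 6
      then have "t - 1 \<ge> 4" "even (t - 1)" by presburger+
      then show ?thesis using 6 t by (simp add: sig0_def) linarith
    qed (use k t in \<open>auto simp: sig0_def\<close>)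
  qed
  moreover have "sig0 (2*k) t = t" if "2*k \<le> t" for t using that k by (simp add: sig0_def)
  ultimately show ?thesis by (simp add: Inv_def)
qed

lemma sig0_bound:
  assumes k: "k \<ge> 2" and N: "N \<ge> 4"
  shows "real (card (H (2*k) (sig0 (2*k)) N)) \<le> (1 - 1/216) * real N ^ Suc k"
proof -
  let ?n = "2*k" and ?s = "sig0 (2*k)"
  let ?J = "Jset ?n ?s"
  define q where "q = N div 3"
  define B :: "nat \<Rightarrow> nat set" where "B j = (if j = 0 \<or> j = 2 then {N - q..<N} else if j = 1 then {..<q} else {..<N})" for j
  have s: "?s \<in> Inv ?n" by (rule sig0_Inv[OF k])
  have J012: "0 \<in> ?J" "1 \<in> ?J" "2 \<in> ?J" using k by (auto simp: Jset_def Fst_def sig0_def image_iff)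
  have cJ: "card ?J = Suc k" by (rule card_Jset[OF s])
  have fJ: "finite ?J" by (simp add: Jset_def Fst_def)
  have g3: "int (g 3) = int (g 0) - int (g 1) + int (g 2)" if g: "g \<in> H ?n ?s N" for g
  proof -
    have "sd ?n g (?s 0) = - sd ?n g 0" using g k by (auto simp: H_def)
    moreover have "?s 0 = 2" by (simp add: sig0_def)
    moreover have "Suc 2 mod ?n = 3" "Suc 0 mod ?n = 1" using k by auto
    ultimately show ?thesis by (simp add: sd_def)
  qed
  have sub: "(\<lambda>g. restrict g ?J) ` H ?n ?s N \<subseteq> PiE ?J (\<lambda>_. {..<N}) - PiE ?J B"
  proof (rule image_subsetI)
    fix g assume g: "g \<in> H ?n ?s N"
    have gN: "\<And>t. t < ?n \<Longrightarrow> g t < N" using g by (auto simp: H_def FN_def PiE_iff)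
    have "restrict g ?J \<in> PiE ?J (\<lambda>_. {..<N})" using Jset_sub[OF s] k gN by (force simp: PiE_iff)
    moreover have "restrict g ?J \<notin> PiE ?J B"
    proof
      assume "restrict g ?J \<in> PiE ?J B"
      then have "g 0 \<in> B 0" "g 1 \<in> B 1" "g 2 \<in> B 2" using J012 by (auto simp: PiE_iff)
      then have "g 0 \<ge> N - q" "g 2 \<ge> N - q" "g 1 < q" by (auto simp: B_def)
      moreover have "3 * q \<le> N" by (simp add: q_def)
      moreover have "g 3 < N" using gN k by simp
      ultimately show False using g3[OF g] by linarith
    qed
    ultimately show "restrict g ?J \<in> PiE ?J (\<lambda>_. {..<N}) - PiE ?J B" by blast
  qed
  have Bsub: "PiE ?J B \<subseteq> PiE ?J (\<lambda>_. {..<N})" by (rule PiE_mono) (auto simp: B_def q_def)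
  have cB: "card (PiE ?J B) = q ^ 3 * N ^ (k - 2)"
  proof -
    have q: "q \<le> N" by (simp add: q_def)
    have "card (PiE ?J B) = (\<Prod>j\<in>?J. card (B j))" by (rule card_PiE[OF fJ])
    also have "\<dots> = (\<Prod>j\<in>?J. if j \<in> {0,1,2} then q else N)"
      by (rule prod.cong) (use q in \<open>auto simp: B_def\<close>)
    also have "\<dots> = (\<Prod>j\<in>?J \<inter> {j. j \<in> {0,1,2}}. q) * (\<Prod>j\<in>?J \<inter> - {j. j \<in> {0,1,2}}. N)"
      by (rule prod.If_cases[OF fJ])
    also have "?J \<inter> {j. j \<in> {0,1,2}} = {0,1,2}" using J012 by auto
    also have "card (?J \<inter> - {j. j \<in> {0,1,2}}) = k - 2"
    proof -
      have "?J \<inter> - {j. j \<in> {0,1,2}} = ?J - {0,1,2}" by auto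
      moreover have "card (?J - {0,1,2}) = card ?J - card {0::nat,1,2}"
        by (rule card_Diff_subset) (use J012 in auto)
      ultimately show ?thesis using cJ by simp
    qed
    ultimately show ?thesis by (simp add: power3_eq_cube)
  qed
  have "card (H ?n ?s N) = card ((\<lambda>g. restrict g ?J) ` H ?n ?s N)"
    using card_image[OF H_restrict_inj[OF s]] by simp
  also have "\<dots> \<le> card (PiE ?J (\<lambda>_. {..<N}) - PiE ?J B)"
    by (rule card_mono[OF _ sub]) (auto intro!: finite_PiE fJ)
  also have "\<dots> = card (PiE ?J (\<lambda>_. {..<N})) - card (PiE ?J B)"
    by (rule card_Diff_subset[OF _ Bsub]) (auto intro!: finite_PiE fJ simp: B_def)
  also have "\<dots> = N ^ Suc k - q ^ 3 * N ^ (k - 2)" using cB cJ by (simp add: card_PiE fJ)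
  finally have c: "card (H ?n ?s N) \<le> N ^ Suc k - q ^ 3 * N ^ (k - 2)" .
  have qle: "q ^ 3 * N ^ (k - 2) \<le> N ^ Suc k"
  proof -
    have "q \<le> N" by (simp add: q_def)
    then have "q ^ 3 \<le> N ^ 3" by (rule power_mono) simp
    then have "q ^ 3 * N ^ (k - 2) \<le> N ^ 3 * N ^ (k - 2)" by simp
    also have "\<dots> = N ^ Suc k" using k by (simp add: power_add[symmetric])
    finally show ?thesis .
  qed
  have "real (card (H ?n ?s N)) \<le> real N ^ Suc k - real q ^ 3 * real N ^ (k - 2)"
    using c qle by (metis of_nat_diff of_nat_le_iff of_nat_mult of_nat_power)
  moreover have "real q ^ 3 * real N ^ (k - 2) \<ge> (1/216) * real N ^ Suc k"
  proof -
    have "6 * q \<ge> N" using N by (simp add: q_def)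
    then have "real q \<ge> real N / 6" by simp
    then have "real q ^ 3 \<ge> (real N / 6) ^ 3" by (rule power_mono) simp
    then have "real q ^ 3 * real N ^ (k - 2) \<ge> (real N / 6) ^ 3 * real N ^ (k - 2)" by (simp add: mult_right_mono)
    moreover have "(real N / 6) ^ 3 * real N ^ (k - 2) = (1/216) * real N ^ Suc k"
      using k by (simp add: power_divide power_add[symmetric] field_simps)
    ultimately show ?thesis by simp
  qed
  ultimately show ?thesis by (simp add: algebra_simps)
qed


definition mult :: "nat \<Rightarrow> (nat \<Rightarrow> nat) \<Rightarrow> nat \<Rightarrow> nat" where
  "mult n f t = card {s\<in>{..<n}. dl n f s = dl n f t}"

definition good :: "nat \<Rightarrow> (nat \<Rightarrow> nat) \<Rightarrow> bool" where
  "good n f = (\<forall>t<n. sd n f t \<noteq> 0 \<and> mult n f t = 2 \<and>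
      (\<forall>s<n. s \<noteq> t \<and> dl n f s = dl n f t \<longrightarrow> sd n f s = - sd n f t))"

definition paired :: "nat \<Rightarrow> (nat \<Rightarrow> nat) \<Rightarrow> bool" where
  "paired n f = (\<forall>t<n. mult n f t \<ge> 2)"

definition Bad :: "nat \<Rightarrow> nat \<Rightarrow> (nat \<Rightarrow> nat) set" where
  "Bad n N = {f \<in> FN n N. paired n f \<and> \<not> good n f}"

definition muF :: "nat \<Rightarrow> (nat \<Rightarrow> nat) \<Rightarrow> nat \<Rightarrow> nat" where
  "muF n f t = (if t < n then (LEAST s. dl n f s = dl n f t) else undefined)"

definition epsF :: "nat \<Rightarrow> (nat \<Rightarrow> nat) \<Rightarrow> nat \<Rightarrow> int" where
  "epsF n f t = (if t < n then (if sd n f t = sd n f (muF n f t) then 1 else -1) else undefined)"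

definition Fixp :: "nat \<Rightarrow> (nat \<Rightarrow> nat) \<Rightarrow> nat set" where
  "Fixp n \<mu> = {a. a < n \<and> \<mu> a = a}"

definition Clo :: "nat \<Rightarrow> (nat \<Rightarrow> nat) \<Rightarrow> (nat \<Rightarrow> int) \<Rightarrow> (nat \<Rightarrow> int) \<Rightarrow> int" where
  "Clo n \<mu> \<epsilon> z = (\<Sum>u<n. Dp \<mu> \<epsilon> u z)"

lemma muF_le: "t < n \<Longrightarrow> muF n f t \<le> t"
  by (simp add: muF_def Least_le)

lemma muF_dl: "t < n \<Longrightarrow> dl n f (muF n f t) = dl n f t"
  by (simp add: muF_def) (rule LeastI[of _ t], simp)

lemma muF_lt: "t < n \<Longrightarrow> muF n f t < n"
  using muF_le le_less_trans by blast

lemma muF_idem: "t < n \<Longrightarrow> muF n f (muF n f t) = muF n f t"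
  using muF_dl[of t n f] muF_lt[of t n f] by (simp add: muF_def)

lemma muF_eq_iff: "t < n \<Longrightarrow> s < n \<Longrightarrow> muF n f s = muF n f t \<longleftrightarrow> dl n f s = dl n f t"
  by (metis muF_def muF_dl)

lemma validpat_muF: "validpat n (muF n f)"
  by (simp add: validpat_def muF_lt muF_idem)

lemma muF_Pat: "f \<in> FN n N \<Longrightarrow> f \<in> Pat n (muF n f) (epsF n f) N"
proof -
  assume f: "f \<in> FN n N"
  have "sd n f t = epsF n f t * sd n f (muF n f t)" if t: "t < n" for t
  proof -
    have "\<bar>sd n f (muF n f t)\<bar> = \<bar>sd n f t\<bar>" using muF_dl[OF t] by (simp add: dl_eq_iff)
    then show ?thesis using t by (auto simp: epsF_def abs_eq_iff)
  qed
  then show ?thesis using f by (simp add: Pat_def)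
qed

lemma Fixp_muF_cls:
  assumes a: "a \<in> Fixp n (muF n f)"
  shows "{t\<in>{..<n}. muF n f t = a} = {s\<in>{..<n}. dl n f s = dl n f a}"
  using a muF_eq_iff[of a n _ f] by (auto simp: Fixp_def)

lemma mult_muF: "t < n \<Longrightarrow> mult n f t = card {u\<in>{..<n}. muF n f u = muF n f t}"
  unfolding mult_def by (rule arg_cong[where f=card]) (auto simp: muF_eq_iff)

lemma sum_classes:
  assumes v: "validpat n \<mu>"
  shows "(\<Sum>a\<in>Fixp n \<mu>. card {t\<in>{..<n}. \<mu> t = a}) = n"
proof -
  have "(\<Sum>a\<in>Fixp n \<mu>. card {t\<in>{..<n}. \<mu> t = a}) = (\<Sum>a\<in>Fixp n \<mu>. \<Sum>t\<in>{t\<in>{..<n}. \<mu> t = a}. (1::nat))"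
    by simp
  also have "\<dots> = (\<Sum>t\<in>{..<n}. (1::nat))"
    by (rule sum.group) (use v in \<open>auto simp: Fixp_def validpat_def\<close>)
  finally show ?thesis by simp
qed

lemma card_Ip_Fixp: "card (Ip n \<mu>) = Suc (card (Fixp n \<mu>))"
  by (simp add: card_Ip Fixp_def)

lemma Ip_Fixp: "Ip n \<mu> = insert n (Fixp n \<mu>)"
  by (simp add: Ip_def Fixp_def)

lemma finite_Fixp: "finite (Fixp n \<mu>)" by (simp add: Fixp_def)

lemma Clo_nondeg:
  assumes v: "validpat n \<mu>" and a: "a \<in> Fixp n \<mu>" and b: "b < n" "b \<noteq> a" "\<mu> b = a" "\<epsilon> b = 1"
    and cls: "{t\<in>{..<n}. \<mu> t = a} = {a, b}"
    and ag: "\<forall>j\<in>Ip n \<mu> - {a}. z j = z' j" and e: "Clo n \<mu> \<epsilon> z = Clo n \<mu> \<epsilon> z'"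
  shows "z a = z' a"
proof -
  have an: "a < n" "\<mu> a = a" using a by (auto simp: Fixp_def)
  have d: "Dp \<mu> \<epsilon> u z - Dp \<mu> \<epsilon> u z' = (if u \<in> {a, b} then z a - z' a else 0)" if u: "u \<in> {..<n}" for u
  proof (cases "u \<in> {a,b}")
    case True then show ?thesis using an b by (auto simp: Dp_def)
  next
    case False
    have vu: "\<mu> u < n" "\<mu> (\<mu> u) = \<mu> u" using v u by (auto simp: validpat_def)
    show ?thesis
    proof (cases "\<mu> u = u")
      case True
      then have "u \<in> Ip n \<mu> - {a}" using u False by (auto simp: Ip_def)
      then show ?thesis using ag True False by (simp add: Dp_def)
    next
      case c: False
      have "\<mu> u \<noteq> a" using cls u False by auto
      then have "\<mu> u \<in> Ip n \<mu> - {a}" using vu by (auto simp: Ip_def)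
      then show ?thesis using ag c False by (simp add: Dp_def)
    qed
  qed
  have "Clo n \<mu> \<epsilon> z - Clo n \<mu> \<epsilon> z' = (\<Sum>u<n. Dp \<mu> \<epsilon> u z - Dp \<mu> \<epsilon> u z')"
    by (simp add: Clo_def sum_subtractf)
  also have "\<dots> = (\<Sum>u<n. if u \<in> {a, b} then z a - z' a else 0)" by (rule sum.cong[OF refl d])
  also have "\<dots> = (\<Sum>u\<in>{..<n} \<inter> {a,b}. z a - z' a)" by (rule sum.inter_restrict[symmetric]) simp
  also have "{..<n} \<inter> {a,b} = {a,b}" using an b by auto
  also have "(\<Sum>u\<in>{a,b}. z a - z' a) = 2 * (z a - z' a)" using b by simp
  finally show ?thesis using e by simp
qed

definition BP :: "nat \<Rightarrow> (nat \<Rightarrow> nat) \<Rightarrow> (nat \<Rightarrow> int) \<Rightarrow> nat \<Rightarrow> (nat \<Rightarrow> nat) set" where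
  "BP k \<mu> \<epsilon> N =
    (if card (Fixp (2*k) \<mu>) < k then Pat (2*k) \<mu> \<epsilon> N else {}) \<union>
    (if card (Fixp (2*k) \<mu>) \<le> k then
       (\<Union>a\<in>Fixp (2*k) \<mu>. {g \<in> Pat (2*k) \<mu> \<epsilon> N. Psi (2*k) \<mu> g a = 0}) \<union>
       (\<Union>a\<in>Fixp (2*k) \<mu>. \<Union>b\<in>{b. b < 2*k \<and> b \<noteq> a \<and> \<mu> b = a \<and> \<epsilon> b = 1 \<and> {t\<in>{..<2*k}. \<mu> t = a} = {a,b}}.
          {g \<in> Pat (2*k) \<mu> \<epsilon> N. Clo (2*k) \<mu> \<epsilon> (Psi (2*k) \<mu> g) = 0})
     else {})"

lemma finite_Pat: "finite (Pat n \<mu> \<epsilon> N)"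
  by (rule finite_subset[OF _ finite_FN[of n N]]) (auto simp: Pat_def)

lemma card_BP:
  assumes v: "validpat (2*k) \<mu>" and k: "k \<ge> 1"
  shows "card (BP k \<mu> \<epsilon> N) \<le> (1 + 2*k + 2*k*(2*k)) * (2*N+1)^k"
proof -
  let ?n = "2*k" and ?F = "Fixp (2*k) \<mu>" and ?P = "Pat (2*k) \<mu> \<epsilon> N" and ?M = "(2*N+1)^k"
  have n: "?n \<ge> 1" using k by simp
  have cF: "card ?F \<le> ?n" by (rule order.trans[OF card_mono[of "{..<?n}"]]) (auto simp: Fixp_def)
  have A: "card (if card ?F < k then ?P else {}) \<le> ?M"
  proof (cases "card ?F < k")
    case True
    have "card ?P \<le> (2*N+1) ^ card (Ip ?n \<mu>)" by (rule Pat_card[OF v n, where \<epsilon>=\<epsilon>]) simp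
    also have "\<dots> \<le> ?M" unfolding card_Ip_Fixp by (rule power_increasing) (use True in auto)
    finally show ?thesis using True by simp
  qed simp
  have B1: "card {g \<in> ?P. Psi ?n \<mu> g a = 0} \<le> ?M" if a: "a \<in> ?F" "card ?F \<le> k" for a
  proof -
    have "card {g \<in> ?P. Psi ?n \<mu> g a = 0} \<le> (2*N+1) ^ (card (Ip ?n \<mu>) - 1)"
      by (rule Pat_card_hyper[OF v n, where G="\<lambda>z. z a" and i=a]) (use a in \<open>auto simp: Ip_Fixp\<close>)
    also have "\<dots> \<le> ?M" unfolding card_Ip_Fixp by (rule power_increasing) (use a in auto)
    finally show ?thesis .
  qed
  have B2: "card {g \<in> ?P. Clo ?n \<mu> \<epsilon> (Psi ?n \<mu> g) = 0} \<le> ?M"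
    if a: "a \<in> ?F" "card ?F \<le> k" and b: "b \<in> {b. b < 2*k \<and> b \<noteq> a \<and> \<mu> b = a \<and> \<epsilon> b = 1 \<and> {t\<in>{..<2*k}. \<mu> t = a} = {a,b}}" for a b
  proof -
    have "card {g \<in> ?P. Clo ?n \<mu> \<epsilon> (Psi ?n \<mu> g) = 0} \<le> (2*N+1) ^ (card (Ip ?n \<mu>) - 1)"
    proof (rule Pat_card_hyper[OF v n, where G="Clo ?n \<mu> \<epsilon>" and i=a])
      show "a \<in> Ip ?n \<mu>" using a by (simp add: Ip_Fixp)
      show "z a = z' a" if "\<forall>j\<in>Ip ?n \<mu> - {a}. z j = z' j" "Clo ?n \<mu> \<epsilon> z = Clo ?n \<mu> \<epsilon> z'" for z z'
        using Clo_nondeg[OF v a(1), of b \<epsilon> z z'] b that by auto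
    qed auto
    also have "\<dots> \<le> ?M" unfolding card_Ip_Fixp by (rule power_increasing) (use a in auto)
    finally show ?thesis .
  qed
  have C: "card (if card ?F \<le> k then
       (\<Union>a\<in>?F. {g \<in> ?P. Psi ?n \<mu> g a = 0}) \<union>
       (\<Union>a\<in>?F. \<Union>b\<in>{b. b < 2*k \<and> b \<noteq> a \<and> \<mu> b = a \<and> \<epsilon> b = 1 \<and> {t\<in>{..<2*k}. \<mu> t = a} = {a,b}}.
          {g \<in> ?P. Clo ?n \<mu> \<epsilon> (Psi ?n \<mu> g) = 0}) else {}) \<le> 2*k * ?M + 2*k*(2*k) * ?M"
  proof (cases "card ?F \<le> k")
    case True
    have c1: "card (\<Union>a\<in>?F. {g \<in> ?P. Psi ?n \<mu> g a = 0}) \<le> 2*k * ?M"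
    proof -
      have "card (\<Union>a\<in>?F. {g \<in> ?P. Psi ?n \<mu> g a = 0}) \<le> (\<Sum>a\<in>?F. card {g \<in> ?P. Psi ?n \<mu> g a = 0})"
        by (rule card_UN_le[OF finite_Fixp])
      also have "\<dots> \<le> (\<Sum>a\<in>?F. ?M)" by (rule sum_mono) (use B1 True in auto)
      also have "\<dots> \<le> 2*k * ?M" using cF by simp
      finally show ?thesis .
    qed
    have c2: "card (\<Union>a\<in>?F. \<Union>b\<in>{b. b < 2*k \<and> b \<noteq> a \<and> \<mu> b = a \<and> \<epsilon> b = 1 \<and> {t\<in>{..<2*k}. \<mu> t = a} = {a,b}}.
          {g \<in> ?P. Clo ?n \<mu> \<epsilon> (Psi ?n \<mu> g) = 0}) \<le> 2*k*(2*k) * ?M"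
    proof -
      have inner: "card (\<Union>b\<in>{b. b < 2*k \<and> b \<noteq> a \<and> \<mu> b = a \<and> \<epsilon> b = 1 \<and> {t\<in>{..<2*k}. \<mu> t = a} = {a,b}}.
          {g \<in> ?P. Clo ?n \<mu> \<epsilon> (Psi ?n \<mu> g) = 0}) \<le> 2*k * ?M" if a: "a \<in> ?F" for a
      proof -
        let ?Bs = "{b. b < 2*k \<and> b \<noteq> a \<and> \<mu> b = a \<and> \<epsilon> b = 1 \<and> {t\<in>{..<2*k}. \<mu> t = a} = {a,b}}"
        have fB: "finite ?Bs" by simp
        have cB: "card ?Bs \<le> 2*k" by (rule order.trans[OF card_mono[of "{..<2*k}"]]) auto
        have "card (\<Union>b\<in>?Bs. {g \<in> ?P. Clo ?n \<mu> \<epsilon> (Psi ?n \<mu> g) = 0}) \<le> (\<Sum>b\<in>?Bs. card {g \<in> ?P. Clo ?n \<mu> \<epsilon> (Psi ?n \<mu> g) = 0})"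
          by (rule card_UN_le[OF fB])
        also have "\<dots> \<le> (\<Sum>b\<in>?Bs. ?M)" by (rule sum_mono) (use B2[OF a True] in auto)
        also have "\<dots> \<le> 2*k * ?M" using cB by simp
        finally show ?thesis .
      qed
      have "card (\<Union>a\<in>?F. \<Union>b\<in>{b. b < 2*k \<and> b \<noteq> a \<and> \<mu> b = a \<and> \<epsilon> b = 1 \<and> {t\<in>{..<2*k}. \<mu> t = a} = {a,b}}.
          {g \<in> ?P. Clo ?n \<mu> \<epsilon> (Psi ?n \<mu> g) = 0}) \<le> (\<Sum>a\<in>?F. card (\<Union>b\<in>{b. b < 2*k \<and> b \<noteq> a \<and> \<mu> b = a \<and> \<epsilon> b = 1 \<and> {t\<in>{..<2*k}. \<mu> t = a} = {a,b}}.
          {g \<in> ?P. Clo ?n \<mu> \<epsilon> (Psi ?n \<mu> g) = 0}))"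
        by (rule card_UN_le[OF finite_Fixp])
      also have "\<dots> \<le> (\<Sum>a\<in>?F. 2*k * ?M)" by (rule sum_mono) (use inner in auto)
      also have "\<dots> \<le> 2*k*(2*k) * ?M" using cF by simp
      finally show ?thesis .
    qed
    show ?thesis using True order.trans[OF card_Un_le add_mono[OF c1 c2]] by simp
  qed simp
  have "card (BP k \<mu> \<epsilon> N) \<le> ?M + (2*k * ?M + 2*k*(2*k) * ?M)"
    unfolding BP_def by (rule order.trans[OF card_Un_le add_mono[OF A C]])
  also have "\<dots> = (1 + 2*k + 2*k*(2*k)) * ?M" by (simp add: algebra_simps)
  finally show ?thesis .
qed

lemma Bad_in_BP:
  assumes f: "f \<in> Bad (2*k) N" and k: "k \<ge> 1"
  shows "f \<in> BP k (muF (2*k) f) (epsF (2*k) f) N"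
proof -
  let ?n = "2*k" and ?\<mu> = "muF (2*k) f" and ?\<epsilon> = "epsF (2*k) f"
  let ?F = "Fixp ?n ?\<mu>"
  define cls where "cls a = {t\<in>{..<?n}. ?\<mu> t = a}" for a
  have fF: "f \<in> FN ?n N" and pr: "paired ?n f" and ng: "\<not> good ?n f" using f by (auto simp: Bad_def)
  have fP: "f \<in> Pat ?n ?\<mu> ?\<epsilon> N" by (rule muF_Pat[OF fF])
  have v: "validpat ?n ?\<mu>" by (rule validpat_muF)
  have n: "?n \<ge> 1" using k by simp
  have clsm: "card (cls a) = mult ?n f a" if a: "a \<in> ?F" for a
    using a mult_muF[of a ?n f] by (simp add: cls_def Fixp_def)
  have cls2: "card (cls a) \<ge> 2" if a: "a \<in> ?F" for a using clsm[OF a] pr a by (auto simp: paired_def Fixp_def)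
  have sumc: "(\<Sum>a\<in>?F. card (cls a)) = ?n" unfolding cls_def by (rule sum_classes[OF v])
  have "2 * card ?F = (\<Sum>a\<in>?F. 2)" by simp
  also have "\<dots> \<le> (\<Sum>a\<in>?F. card (cls a))" by (rule sum_mono) (use cls2 in auto)
  finally have cF: "card ?F \<le> k" using sumc by simp
  show ?thesis
  proof (cases "card ?F < k")
    case True then show ?thesis using fP by (simp add: BP_def)
  next
    case False
    then have cFk: "card ?F = k" using cF by simp
    have all2: "card (cls a) = 2" if a: "a \<in> ?F" for a
    proof (rule ccontr)
      assume "card (cls a) \<noteq> 2"
      then have g3: "card (cls a) \<ge> 3" using cls2[OF a] by simp
      have "(\<Sum>a\<in>?F. card (cls a)) = card (cls a) + (\<Sum>b\<in>?F - {a}. card (cls b))"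
        by (rule sum.remove[OF finite_Fixp a])
      also have "(\<Sum>b\<in>?F - {a}. card (cls b)) \<ge> (\<Sum>b\<in>?F - {a}. 2)" by (rule sum_mono) (use cls2 in auto)
      moreover have "(\<Sum>b\<in>?F - {a}. (2::nat)) = 2 * (k - 1)" using cFk a finite_Fixp by simp
      ultimately have "(\<Sum>a\<in>?F. card (cls a)) \<ge> 3 + 2 * (k - 1)" using g3 by linarith
      then show False using sumc k by simp
    qed
    have mult2: "mult ?n f t = 2" if t: "t < ?n" for t
    proof -
      have "?\<mu> t \<in> ?F" using t muF_idem[OF t] muF_lt[OF t] by (simp add: Fixp_def)
      then show ?thesis using all2 clsm mult_muF[OF t] by (metis cls_def)
    qed
    obtain t where t: "t < ?n" and bad: "sd ?n f t = 0 \<or> (\<exists>s<?n. s \<noteq> t \<and> dl ?n f s = dl ?n f t \<and> sd ?n f s \<noteq> - sd ?n f t)"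
      using ng mult2 unfolding good_def by blast
    define a where "a = ?\<mu> t"
    have aF: "a \<in> ?F" using t muF_idem[OF t] muF_lt[OF t] by (simp add: Fixp_def a_def)
    have an: "a < ?n" "?\<mu> a = a" using aF by (auto simp: Fixp_def)
    have dla: "dl ?n f a = dl ?n f t" using muF_dl[OF t] by (simp add: a_def)
    have Psia: "Psi ?n ?\<mu> f a = sd ?n f a" using an by (simp add: Psi_def)
    from bad show ?thesis
    proof
      assume "sd ?n f t = 0"
      then have "sd ?n f a = 0" using dla by (simp add: dl_0_iff[symmetric])
      then have "f \<in> {g \<in> Pat ?n ?\<mu> ?\<epsilon> N. Psi ?n ?\<mu> g a = 0}" using fP Psia by simp
      then show ?thesis using aF unfolding BP_def if_P[OF cF] by blast
    next
      assume "\<exists>s<?n. s \<noteq> t \<and> dl ?n f s = dl ?n f t \<and> sd ?n f s \<noteq> - sd ?n f t"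
      then obtain s where s: "s < ?n" "s \<noteq> t" "dl ?n f s = dl ?n f t" "sd ?n f s \<noteq> - sd ?n f t" by blast
      have sdeq: "sd ?n f s = sd ?n f t" using s(3,4) by (auto simp: dl_eq_iff abs_eq_iff)
      have ms: "?\<mu> s = a" using muF_eq_iff[OF t s(1)] s(3) by (simp add: a_def)
      have ca: "cls a = {s, t}"
      proof -
        have "{s, t} \<subseteq> cls a" using s t ms by (auto simp: cls_def a_def)
        moreover have "card {s, t} = 2" using s by simp
        moreover have "finite (cls a)" by (simp add: cls_def)
        ultimately have "{s, t} = cls a" using all2[OF aF] by (intro card_subset_eq) auto
        then show ?thesis by simp
      qed
      have "a \<in> cls a" using an by (simp add: cls_def)
      then have aST: "a = s \<or> a = t" using ca by auto
      define b where "b = (if s = a then t else s)"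
      have b: "b < ?n" "b \<noteq> a" "?\<mu> b = a" "cls a = {a, b}"
        using aST ca s t ms by (auto simp: b_def a_def)
      have "sd ?n f b = sd ?n f a" using aST sdeq by (auto simp: b_def)
      then have eb: "?\<epsilon> b = 1" using b by (simp add: epsF_def)
      have "Clo ?n ?\<mu> ?\<epsilon> (Psi ?n ?\<mu> f) = (\<Sum>u<?n. sd ?n f u)"
        unfolding Clo_def using Dp_Psi[OF v fP] by simp
      also have "\<dots> = 0" by (rule closure_sum[OF n])
      finally have "f \<in> {g \<in> Pat ?n ?\<mu> ?\<epsilon> N. Clo ?n ?\<mu> ?\<epsilon> (Psi ?n ?\<mu> g) = 0}" using fP by simp
      moreover have "b \<in> {b. b < 2*k \<and> b \<noteq> a \<and> ?\<mu> b = a \<and> ?\<epsilon> b = 1 \<and> {t\<in>{..<2*k}. ?\<mu> t = a} = {a,b}}"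
        using b eb by (simp add: cls_def)
      ultimately show ?thesis using aF unfolding BP_def if_P[OF cF] by blast
    qed
  qed
qed

definition PP :: "nat \<Rightarrow> ((nat \<Rightarrow> nat) \<times> (nat \<Rightarrow> int)) set" where
  "PP n = {p \<in> PiE {..<n} (\<lambda>_. {..<n}) \<times> PiE {..<n} (\<lambda>_. {-1,1}). validpat n (fst p)}"

lemma finite_PP: "finite (PP n)"
  by (rule finite_subset[of _ "PiE {..<n} (\<lambda>_. {..<n}) \<times> PiE {..<n} (\<lambda>_. {-1,1})"])
     (auto simp: PP_def intro!: finite_PiE)

lemma card_Bad:
  assumes k: "k \<ge> 1"
  shows "card (Bad (2*k) N) \<le> card (PP (2*k)) * ((1 + 2*k + 2*k*(2*k)) * (2*N+1)^k)"
proof -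
  let ?n = "2*k"
  have sub: "Bad ?n N \<subseteq> (\<Union>p\<in>PP ?n. BP k (fst p) (snd p) N)"
  proof
    fix f assume f: "f \<in> Bad ?n N"
    have m1: "muF ?n f \<in> PiE {..<?n} (\<lambda>_. {..<?n})"
      unfolding PiE_iff extensional_def by (auto simp: muF_lt) (simp add: muF_def)
    have m2: "epsF ?n f \<in> PiE {..<?n} (\<lambda>_. {-1,1})"
      unfolding PiE_iff extensional_def by (auto simp: epsF_def)
    have "(muF ?n f, epsF ?n f) \<in> PP ?n" using m1 m2 by (simp add: PP_def validpat_muF)
    then show "f \<in> (\<Union>p\<in>PP ?n. BP k (fst p) (snd p) N)" using Bad_in_BP[OF f k] by force
  qed
  have "card (Bad ?n N) \<le> card (\<Union>p\<in>PP ?n. BP k (fst p) (snd p) N)"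
    by (rule card_mono[OF _ sub]) (intro finite_UN_I finite_PP, simp add: BP_def finite_Pat finite_Fixp)
  also have "\<dots> \<le> (\<Sum>p\<in>PP ?n. card (BP k (fst p) (snd p) N))" by (rule card_UN_le[OF finite_PP])
  also have "\<dots> \<le> (\<Sum>p\<in>PP ?n. (1 + 2*k + 2*k*(2*k)) * (2*N+1)^k)"
  proof (rule sum_mono)
    fix p assume "p \<in> PP ?n"
    then have "validpat ?n (fst p)" by (simp add: PP_def)
    then show "card (BP k (fst p) (snd p) N) \<le> (1 + 2*k + 2*k*(2*k)) * (2*N+1)^k" by (rule card_BP[OF _ k])
  qed
  also have "\<dots> = card (PP ?n) * ((1 + 2*k + 2*k*(2*k)) * (2*N+1)^k)" by simp
  finally show ?thesis .
qed


definition InvS :: "nat set \<Rightarrow> (nat \<Rightarrow> nat) set" where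
  "InvS S = {\<sigma>. (\<forall>x\<in>S. \<sigma> x \<in> S \<and> \<sigma> x \<noteq> x \<and> \<sigma> (\<sigma> x) = x) \<and> (\<forall>x. x \<notin> S \<longrightarrow> \<sigma> x = x)}"

lemma Inv_InvS: "Inv n = InvS {..<n}"
  by (auto simp: Inv_def InvS_def)

lemma finite_InvS: "finite S \<Longrightarrow> finite (InvS S)"
proof -
  assume S: "finite S"
  have "InvS S \<subseteq> (\<lambda>g x. if x \<in> S then g x else x) ` (PiE S (\<lambda>_. S))"
  proof
    fix \<sigma> assume s: "\<sigma> \<in> InvS S"
    have "\<sigma> = (\<lambda>x. if x \<in> S then (restrict \<sigma> S) x else x)" using s by (auto simp: InvS_def fun_eq_iff)
    moreover have "restrict \<sigma> S \<in> PiE S (\<lambda>_. S)" using s by (auto simp: InvS_def)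
    ultimately show "\<sigma> \<in> (\<lambda>g x. if x \<in> S then g x else x) ` (PiE S (\<lambda>_. S))" by blast
  qed
  then show ?thesis by (rule finite_subset) (auto intro: finite_PiE S)
qed

lemma card_InvS:
  assumes "finite S" "card S = 2 * m"
  shows "card (InvS S) \<le> (\<Prod>i<m. 2 * i + 1)"
  using assms
proof (induction m arbitrary: S)
  case 0
  then have "S = {}" by simp
  then have "InvS S = {id}" by (auto simp: InvS_def fun_eq_iff)
  then show ?case by simp
next
  case (Suc m)
  have "S \<noteq> {}" using Suc.prems by auto
  then obtain x where x: "x \<in> S" by blast
  let ?A = "\<lambda>y. {\<sigma> \<in> InvS S. \<sigma> x = y}"
  have cov: "InvS S \<subseteq> (\<Union>y\<in>S - {x}. ?A y)" using x by (auto simp: InvS_def)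
  have each: "card (?A y) \<le> (\<Prod>i<m. 2 * i + 1)" if y: "y \<in> S - {x}" for y
  proof -
    let ?S' = "S - {x, y}"
    have cS': "card ?S' = 2 * m" using Suc.prems x y by (simp add: card_Diff_subset)
    have fS': "finite ?S'" using Suc.prems by simp
    have maps: "(\<lambda>\<sigma>. \<sigma>(x := x, y := y)) ` ?A y \<subseteq> InvS ?S'"
    proof (rule image_subsetI)
      fix \<sigma> assume "\<sigma> \<in> ?A y"
      then have s: "\<sigma> \<in> InvS S" "\<sigma> x = y" by auto
      have sy: "\<sigma> y = x" using s x by (auto simp: InvS_def)
      have P1: "\<forall>z\<in>?S'. (\<sigma>(x := x, y := y)) z \<in> ?S' \<and> (\<sigma>(x := x, y := y)) z \<noteq> z \<and> (\<sigma>(x := x, y := y)) ((\<sigma>(x := x, y := y)) z) = z"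
      proof
        fix z assume z: "z \<in> ?S'"
        have zS: "\<sigma> z \<in> S" "\<sigma> z \<noteq> z" "\<sigma> (\<sigma> z) = z" using s z by (auto simp: InvS_def)
        have nx: "\<sigma> z \<noteq> x" using zS(3) s(2) z by force
        have ny: "\<sigma> z \<noteq> y" using zS(3) sy z by force
        show "(\<sigma>(x := x, y := y)) z \<in> ?S' \<and> (\<sigma>(x := x, y := y)) z \<noteq> z \<and> (\<sigma>(x := x, y := y)) ((\<sigma>(x := x, y := y)) z) = z"
          using z zS nx ny by auto
      qed
      have P2: "\<forall>z. z \<notin> ?S' \<longrightarrow> (\<sigma>(x := x, y := y)) z = z"
      proof (intro allI impI)
        fix z assume z: "z \<notin> ?S'"
        show "(\<sigma>(x := x, y := y)) z = z"
        proof (cases "z = x \<or> z = y")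
          case True then show ?thesis by auto
        next
          case False then have "z \<notin> S" using z by auto
          then show ?thesis using s False by (auto simp: InvS_def)
        qed
      qed
      show "\<sigma>(x := x, y := y) \<in> InvS ?S'" unfolding InvS_def using P1 P2 by blast
    qed
    have inj: "inj_on (\<lambda>\<sigma>. \<sigma>(x := x, y := y)) (?A y)"
    proof (rule inj_onI)
      fix \<sigma>1 \<sigma>2 assume s1: "\<sigma>1 \<in> ?A y" and s2: "\<sigma>2 \<in> ?A y" and e: "\<sigma>1(x := x, y := y) = \<sigma>2(x := x, y := y)"
      have "\<sigma>1 y = x" "\<sigma>2 y = x" using s1 s2 x by (auto simp: InvS_def)
      then show "\<sigma>1 = \<sigma>2" using s1 s2 e by (auto simp: fun_eq_iff split: if_splits) (metis fun_upd_other)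
    qed
    have "card (?A y) = card ((\<lambda>\<sigma>. \<sigma>(x := x, y := y)) ` ?A y)" using card_image[OF inj] by simp
    also have "\<dots> \<le> card (InvS ?S')" by (rule card_mono[OF finite_InvS[OF fS'] maps])
    also have "\<dots> \<le> (\<Prod>i<m. 2 * i + 1)" by (rule Suc.IH[OF fS' cS'])
    finally show ?thesis .
  qed
  have fA: "finite (?A y)" for y using finite_InvS[OF Suc.prems(1)] by simp
  have "card (InvS S) \<le> card (\<Union>y\<in>S - {x}. ?A y)"
    by (rule card_mono[OF _ cov]) (use Suc.prems(1) fA in auto)
  also have "\<dots> \<le> (\<Sum>y\<in>S - {x}. card (?A y))" by (rule card_UN_le) (use Suc.prems(1) in simp)
  also have "\<dots> \<le> (\<Sum>y\<in>S - {x}. \<Prod>i<m. 2 * i + 1)" by (rule sum_mono) (use each in auto)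
  also have "\<dots> = (2 * m + 1) * (\<Prod>i<m. 2 * i + 1)" using Suc.prems x by simp
  also have "\<dots> = (\<Prod>i<Suc m. 2 * i + 1)" by simp
  finally show ?case .
qed

lemma card_Inv_le: "card (Inv (2*k)) \<le> odd_double_fact k"
  unfolding Inv_InvS odd_double_fact_def by (rule card_InvS) auto


lemma emom_nz:
  assumes e: "emom p n f \<noteq> 0" and m1: "mom p 1 = 0"
  shows "(\<forall>t<n. sd n f t \<noteq> 0) \<and> paired n f"
proof -
  have nz: "\<not> (\<exists>t<n. dl n f t = 0)"
  proof
    assume "\<exists>t<n. dl n f t = 0"
    then have "emom p n f = 0" by (simp add: emom_def)
    with e show False by simp
  qed
  then have "emom p n f = (\<Prod>v\<in>dl n f ` {..<n}. mom p (card {t\<in>{..<n}. dl n f t = v}))"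
    unfolding emom_def by (rule if_not_P)
  then have pr: "(\<Prod>v\<in>dl n f ` {..<n}. mom p (card {t\<in>{..<n}. dl n f t = v})) \<noteq> 0"
    using e by simp
  have "mult n f t \<ge> 2" if t: "t < n" for t
  proof -
    have "mom p (card {s\<in>{..<n}. dl n f s = dl n f t}) \<noteq> 0"
      using pr t by (auto simp: prod_zero_iff)
    then have "mult n f t \<noteq> 1" using m1 by (auto simp: mult_def)
    moreover have "mult n f t \<noteq> 0" using t by (auto simp: mult_def)
    ultimately show ?thesis by simp
  qed
  then show ?thesis using nz by (auto simp: paired_def dl_0_iff)
qed

lemma emom_one:
  assumes m2: "mom p 2 = 1" and h: "\<forall>t<n. sd n f t \<noteq> 0 \<and> mult n f t = 2"
  shows "emom p n f = 1"
proof -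
  have nz: "\<not> (\<exists>t<n. dl n f t = 0)" using h by (auto simp: dl_0_iff)
  have "(\<Prod>v\<in>dl n f ` {..<n}. mom p (card {t\<in>{..<n}. dl n f t = v})) = (\<Prod>v\<in>dl n f ` {..<n}. 1)"
  proof (rule prod.cong[OF refl])
    fix v assume "v \<in> dl n f ` {..<n}"
    then obtain t where t: "t < n" "v = dl n f t" by auto
    then show "mom p (card {t\<in>{..<n}. dl n f t = v}) = 1" using h m2 by (auto simp: mult_def)
  qed
  then show ?thesis using nz by (simp add: emom_def)
qed

definition Cm :: "(real \<Rightarrow> real) \<Rightarrow> nat \<Rightarrow> real" where
  "Cm p n = (1 + (\<Sum>m\<le>n. \<bar>mom p m\<bar>)) ^ n"

lemma emom_bound: "\<bar>emom p n f\<bar> \<le> Cm p n"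
proof -
  let ?C = "1 + (\<Sum>m\<le>n. \<bar>mom p m\<bar>)"
  have C1: "?C \<ge> 1" by (simp add: sum_nonneg)
  let ?V = "dl n f ` {..<n}"
  have each: "\<bar>mom p (card {t\<in>{..<n}. dl n f t = v})\<bar> \<le> ?C" for v
  proof -
    have c: "card {t\<in>{..<n}. dl n f t = v} \<le> n" by (rule order.trans[OF card_mono[of "{..<n}"]]) auto
    have "\<bar>mom p (card {t\<in>{..<n}. dl n f t = v})\<bar> \<le> (\<Sum>m\<le>n. \<bar>mom p m\<bar>)"
      by (rule member_le_sum) (use c in auto)
    then show ?thesis by simp
  qed
  have "\<bar>emom p n f\<bar> \<le> \<bar>\<Prod>v\<in>?V. mom p (card {t\<in>{..<n}. dl n f t = v})\<bar>" by (simp add: emom_def)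
  also have "\<dots> = (\<Prod>v\<in>?V. \<bar>mom p (card {t\<in>{..<n}. dl n f t = v})\<bar>)" by (rule abs_prod)
  also have "\<dots> \<le> (\<Prod>v\<in>?V. ?C)" by (rule prod_mono) (use each in auto)
  also have "\<dots> = ?C ^ card ?V" by simp
  also have "\<dots> \<le> ?C ^ n" by (rule power_increasing[OF _ C1]) (rule order.trans[OF card_image_le], auto)
  finally show ?thesis by (simp add: Cm_def)
qed

definition hc :: "nat \<Rightarrow> nat \<Rightarrow> (nat \<Rightarrow> nat) \<Rightarrow> nat" where
  "hc n N f = card {\<sigma> \<in> Inv n. f \<in> H n \<sigma> N}"

lemma H_paired:
  assumes s: "\<sigma> \<in> Inv n" and f: "f \<in> H n \<sigma> N"
  shows "paired n f"
  unfolding paired_def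
proof (intro allI impI)
  fix t assume t: "t < n"
  have st: "\<sigma> t < n" "\<sigma> t \<noteq> t" using InvD[OF s t] by auto
  have "sd n f (\<sigma> t) = - sd n f t" using f t by (auto simp: H_def)
  then have "dl n f (\<sigma> t) = dl n f t" by (simp add: dl_eq_iff)
  then have "{t, \<sigma> t} \<subseteq> {s\<in>{..<n}. dl n f s = dl n f t}" using t st by auto
  then have "card {t, \<sigma> t} \<le> mult n f t" unfolding mult_def by (rule card_mono[rotated]) auto
  then show "mult n f t \<ge> 2" using st by simp
qed

lemma hc_good:
  assumes g: "good n f" and fF: "f \<in> FN n N"
  shows "hc n N f = 1"
proof -
  have uniq: "\<exists>!s. s < n \<and> s \<noteq> t \<and> dl n f s = dl n f t" if t: "t < n" for t
  proof -
    have c2: "card {s\<in>{..<n}. dl n f s = dl n f t} = 2" using g t by (auto simp: good_def mult_def)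
    then obtain a b where ab: "{s\<in>{..<n}. dl n f s = dl n f t} = {a, b}" "a \<noteq> b" by (auto simp: card_2_iff)
    have mem: "(s < n \<and> dl n f s = dl n f t) \<longleftrightarrow> s \<in> {a, b}" for s
    proof -
      have "s \<in> {s\<in>{..<n}. dl n f s = dl n f t} \<longleftrightarrow> s \<in> {a,b}" by (simp only: ab(1))
      then show ?thesis by simp
    qed
    have tab: "t = a \<or> t = b" using mem[of t] t by simp
    have am: "a < n \<and> dl n f a = dl n f t" using mem[of a] by simp
    have bm: "b < n \<and> dl n f b = dl n f t" using mem[of b] by simp
    from tab show ?thesis
    proof
      assume ta: "t = a"
      show ?thesis
      proof (rule ex1I[of _ b])
        show "b < n \<and> b \<noteq> t \<and> dl n f b = dl n f t" using bm ta ab(2) by simp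
        fix s assume h: "s < n \<and> s \<noteq> t \<and> dl n f s = dl n f t"
        then have "s \<in> {a, b}" using mem[of s] by simp
        then show "s = b" using h ta by simp
      qed
    next
      assume tb: "t = b"
      show ?thesis
      proof (rule ex1I[of _ a])
        show "a < n \<and> a \<noteq> t \<and> dl n f a = dl n f t" using am tb ab(2) by simp
        fix s assume h: "s < n \<and> s \<noteq> t \<and> dl n f s = dl n f t"
        then have "s \<in> {a, b}" using mem[of s] by simp
        then show "s = a" using h tb by simp
      qed
    qed
  qed
  define \<tau> where "\<tau> t = (if t < n then (THE s. s < n \<and> s \<noteq> t \<and> dl n f s = dl n f t) else t)" for t
  have \<tau>t: "\<tau> t = (THE s. s < n \<and> s \<noteq> t \<and> dl n f s = dl n f t)" if t: "t < n" for t
    using t unfolding \<tau>_def by (simp only: if_True)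
  have \<tau>P: "\<tau> t < n \<and> \<tau> t \<noteq> t \<and> dl n f (\<tau> t) = dl n f t" if t: "t < n" for t
    unfolding \<tau>t[OF t] by (rule theI'[OF uniq[OF t]])
  have \<tau>U: "s = \<tau> t" if t: "t < n" and s: "s < n" "s \<noteq> t" "dl n f s = dl n f t" for s t
    unfolding \<tau>t[OF t] by (rule the1_equality[OF uniq[OF t], symmetric]) (use s in blast)
  have \<tau>n: "\<tau> t = t" if "\<not> t < n" for t using that by (simp add: \<tau>_def)
  have \<tau>I: "\<tau> \<in> Inv n"
  proof -
    have "\<tau> (\<tau> t) = t" if t: "t < n" for t
    proof -
      have "t = \<tau> (\<tau> t)" by (rule \<tau>U) (use \<tau>P[OF t] t in auto)
      then show ?thesis by simp
    qed
    then show ?thesis using \<tau>P \<tau>n unfolding Inv_def by auto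
  qed
  have \<tau>H: "f \<in> H n \<tau> N"
  proof -
    have "sd n f (\<tau> t) = - sd n f t" if t: "t < n" for t
      using g \<tau>P[OF t] t by (auto simp: good_def)
    then show ?thesis using fF by (simp add: H_def)
  qed
  have "{\<sigma> \<in> Inv n. f \<in> H n \<sigma> N} = {\<tau>}"
  proof
    show "{\<tau>} \<subseteq> {\<sigma> \<in> Inv n. f \<in> H n \<sigma> N}" using \<tau>I \<tau>H by auto
    show "{\<sigma> \<in> Inv n. f \<in> H n \<sigma> N} \<subseteq> {\<tau>}"
    proof clarify
      fix \<sigma> assume s: "\<sigma> \<in> Inv n" and fH: "f \<in> H n \<sigma> N"
      show "\<sigma> = \<tau>"
      proof
        fix t show "\<sigma> t = \<tau> t"
        proof (cases "t < n")
          case True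
          have "sd n f (\<sigma> t) = - sd n f t" using fH True by (auto simp: H_def)
          then have "dl n f (\<sigma> t) = dl n f t" by (simp add: dl_eq_iff)
          then show ?thesis using \<tau>U[OF True] InvD[OF s True] by auto
        next
          case False then show ?thesis using s \<tau>n[OF False] by (simp add: Inv_def)
        qed
      qed
    qed
  qed
  then show ?thesis by (simp add: hc_def)
qed

lemma sum_card_H: "(\<Sum>\<sigma>\<in>Inv n. card (H n \<sigma> N)) = (\<Sum>f\<in>FN n N. hc n N f)"
proof -
  have "card (H n \<sigma> N) = (\<Sum>f\<in>FN n N. if f \<in> H n \<sigma> N then 1 else 0)" for \<sigma>
  proof -
    have "(\<Sum>f\<in>FN n N. if f \<in> H n \<sigma> N then 1 else (0::nat)) = (\<Sum>f\<in>FN n N \<inter> H n \<sigma> N. 1)"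
      by (rule sum.inter_restrict[symmetric]) (rule finite_FN)
    also have "FN n N \<inter> H n \<sigma> N = H n \<sigma> N" by (auto simp: H_def)
    finally show ?thesis by simp
  qed
  then have "(\<Sum>\<sigma>\<in>Inv n. card (H n \<sigma> N)) = (\<Sum>\<sigma>\<in>Inv n. \<Sum>f\<in>FN n N. if f \<in> H n \<sigma> N then 1 else 0)" by simp
  also have "\<dots> = (\<Sum>f\<in>FN n N. \<Sum>\<sigma>\<in>Inv n. if f \<in> H n \<sigma> N then 1 else 0)" by (rule sum.swap)
  also have "\<dots> = (\<Sum>f\<in>FN n N. hc n N f)"
  proof (rule sum.cong[OF refl])
    fix f
    have "(\<Sum>\<sigma>\<in>Inv n. if f \<in> H n \<sigma> N then 1 else (0::nat)) = (\<Sum>\<sigma>\<in>{\<sigma> \<in> Inv n. f \<in> H n \<sigma> N}. 1)"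
      by (rule sum.inter_filter[OF finite_Inv, symmetric])
    also have "\<dots> = hc n N f" unfolding hc_def by (rule card_eq_sum[symmetric])
    finally show "(\<Sum>\<sigma>\<in>Inv n. if f \<in> H n \<sigma> N then 1 else (0::nat)) = hc n N f" .
  qed
  finally show ?thesis .
qed


lemma S_T_bound:
  assumes m1: "mom p 1 = 0" and m2: "mom p 2 = 1"
  shows "\<bar>(\<Sum>f\<in>FN n N. emom p n f) - real (\<Sum>\<sigma>\<in>Inv n. card (H n \<sigma> N))\<bar>
          \<le> (Cm p n + real (card (Inv n))) * real (card (Bad n N))"
proof -
  define d where "d f = emom p n f - real (hc n N f)" for f
  have eq0: "d f = 0" if f: "f \<in> FN n N - Bad n N" for f
  proof (cases "good n f")
    case True
    have "\<forall>t<n. sd n f t \<noteq> 0 \<and> mult n f t = 2" using True by (auto simp: good_def)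
    then have "emom p n f = 1" by (rule emom_one[OF m2])
    moreover have "hc n N f = 1" using hc_good[OF True] f by auto
    ultimately show ?thesis by (simp add: d_def)
  next
    case False
    then have np: "\<not> paired n f" using f by (auto simp: Bad_def)
    have "emom p n f = 0" using emom_nz[OF _ m1] np by blast
    moreover have e: "{\<sigma> \<in> Inv n. f \<in> H n \<sigma> N} = {}" using H_paired np by blast
    have "hc n N f = 0" unfolding hc_def e by simp
    ultimately show ?thesis by (simp add: d_def)
  qed
  have bd: "\<bar>d f\<bar> \<le> Cm p n + real (card (Inv n))" for f
  proof -
    have "hc n N f \<le> card (Inv n)" unfolding hc_def by (rule card_mono[OF finite_Inv]) auto
    then show ?thesis using emom_bound[of p n f] by (simp add: d_def abs_le_iff)
  qed
  have BF: "Bad n N \<subseteq> FN n N" by (auto simp: Bad_def)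
  have "(\<Sum>f\<in>FN n N. emom p n f) - real (\<Sum>\<sigma>\<in>Inv n. card (H n \<sigma> N)) = (\<Sum>f\<in>FN n N. d f)"
    by (simp add: sum_card_H d_def sum_subtractf)
  also have "\<dots> = (\<Sum>f\<in>Bad n N. d f)"
    by (rule sum.mono_neutral_right[OF finite_FN BF]) (use eq0 in auto)
  finally have "\<bar>(\<Sum>f\<in>FN n N. emom p n f) - real (\<Sum>\<sigma>\<in>Inv n. card (H n \<sigma> N))\<bar> = \<bar>\<Sum>f\<in>Bad n N. d f\<bar>" by simp
  also have "\<dots> \<le> (\<Sum>f\<in>Bad n N. \<bar>d f\<bar>)" by (rule sum_abs)
  also have "\<dots> \<le> (\<Sum>f\<in>Bad n N. Cm p n + real (card (Inv n)))" by (rule sum_mono) (rule bd)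
  also have "\<dots> = (Cm p n + real (card (Inv n))) * real (card (Bad n N))" by (simp add: mult.commute)
  finally show ?thesis .
qed

lemma Cm_nonneg: "Cm p n \<ge> 0" by (simp add: Cm_def sum_nonneg)

lemma Bad_bound_real:
  assumes k: "k \<ge> 1" and N: "N \<ge> 1"
  shows "real (card (Bad (2*k) N)) \<le> real (card (PP (2*k)) * (1 + 2*k + 2*k*(2*k)) * 3^k) * real N ^ k"
proof -
  have "card (Bad (2*k) N) \<le> card (PP (2*k)) * ((1 + 2*k + 2*k*(2*k)) * (2*N+1)^k)" by (rule card_Bad[OF k])
  also have "card (PP (2*k)) * ((1 + 2*k + 2*k*(2*k)) * (2*N+1)^k) \<le> card (PP (2*k)) * ((1 + 2*k + 2*k*(2*k)) * (3*N)^k)"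
  proof -
    have "(2*N+1)^k \<le> (3*N)^k" using N by (intro power_mono) auto
    then show ?thesis by (intro mult_le_mono2)
  qed
  also have "\<dots> = card (PP (2*k)) * (1 + 2*k + 2*k*(2*k)) * 3^k * N^k" by (simp only: power_mult_distrib mult.assoc)
  finally have "card (Bad (2*k) N) \<le> card (PP (2*k)) * (1 + 2*k + 2*k*(2*k)) * 3^k * N^k" .
  then have "real (card (Bad (2*k) N)) \<le> real (card (PP (2*k)) * (1 + 2*k + 2*k*(2*k)) * 3^k * N^k)"
    by (simp only: of_nat_le_iff)
  then show ?thesis by simp
qed

theorem mainTheorem7:
  fixes M :: "'a measure" and X :: "nat \<Rightarrow> 'a \<Rightarrow> real"
    and p :: "real \<Rightarrow> real" and k :: nat
  assumes "prob_space M"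
    and "prob_space.indep_vars M (\<lambda>_. borel) X {1..}"
    and "\<And>j. j \<ge> 1 \<Longrightarrow> distributed M lborel (X j) (\<lambda>x. ennreal (p x))"
    and "\<And>x. p x \<ge> 0"
    and "\<And>m::nat. integrable lborel (\<lambda>x. x ^ m * p x)"
    and "(LINT x|lborel. x * p x) = 0"
    and "(LINT x|lborel. x ^ 2 * p x) = 1"
    and "k \<ge> 2"
  shows "\<exists>L. (\<lambda>N. moment_N M X (2 * k) N) \<longlonglongrightarrow> L \<and> L < real (odd_double_fact k)"
proof -
  interpret T: toep M X p
    by (rule toep.intro[OF assms(1)], rule toep_axioms.intro) (use assms(2-5) in auto)
  let ?n = "2*k"
  have k1: "k \<ge> 1" using assms(8) by simp
  have n1: "?n \<ge> 1" using k1 by simp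
  have m1: "mom p 1 = 0" using assms(6) by (simp add: mom_def)
  have m2: "mom p 2 = 1" using assms(7) by (simp add: mom_def)
  define r where "r \<sigma> N = real (card (H ?n \<sigma> N)) / real N ^ Suc k" for \<sigma> N
  define S where "S N = (\<Sum>f\<in>FN ?n N. emom p ?n f)" for N
  define L where "L = (\<Sum>\<sigma>\<in>Inv ?n. lim (r \<sigma>))"
  have conv: "r \<sigma> \<longlonglongrightarrow> lim (r \<sigma>)" if s: "\<sigma> \<in> Inv ?n" for \<sigma>
    using H_convergent[OF s k1] unfolding r_def by (simp add: convergent_LIMSEQ_iff)
  have sumlim: "(\<lambda>N. \<Sum>\<sigma>\<in>Inv ?n. r \<sigma> N) \<longlonglongrightarrow> L"
    unfolding L_def by (rule tendsto_sum) (rule conv)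
  define C where "C = (Cm p ?n + real (card (Inv ?n))) * real (card (PP ?n) * (1 + 2*k + 2*k*(2*k)) * 3^k)"
  have Cnn: "C \<ge> 0" unfolding C_def using Cm_nonneg[of p ?n] by simp
  have momeq: "moment_N M X ?n N = S N / real N ^ Suc k" if N: "N \<ge> 1" for N
  proof -
    have e: "real ?n / 2 + 1 = real (Suc k)" by simp
    have pw: "real N powr real (Suc k) = real N ^ Suc k" by (rule powr_realpow) (use N in simp)
    have "real N powr (-(real ?n / 2 + 1)) = 1 / real N ^ Suc k"
      unfolding e powr_minus pw by (simp add: divide_inverse)
    then show ?thesis using T.moment_N_eq[OF n1, of N] by (simp add: S_def)
  qed
  have diffb: "norm (moment_N M X ?n N - (\<Sum>\<sigma>\<in>Inv ?n. r \<sigma> N)) \<le> C / real N" if N: "N \<ge> 1" for N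
  proof -
    have Np: "real N ^ Suc k > 0" using N by simp
    have sr: "(\<Sum>\<sigma>\<in>Inv ?n. r \<sigma> N) = real (\<Sum>\<sigma>\<in>Inv ?n. card (H ?n \<sigma> N)) / real N ^ Suc k"
      by (simp add: r_def sum_divide_distrib)
    have "norm (moment_N M X ?n N - (\<Sum>\<sigma>\<in>Inv ?n. r \<sigma> N))
        = \<bar>S N - real (\<Sum>\<sigma>\<in>Inv ?n. card (H ?n \<sigma> N))\<bar> / real N ^ Suc k"
      using Np by (simp add: momeq[OF N] sr diff_divide_distrib[symmetric] abs_divide)
    also have "\<dots> \<le> ((Cm p ?n + real (card (Inv ?n))) * real (card (Bad ?n N))) / real N ^ Suc k"
      using S_T_bound[OF m1 m2, of ?n N] Np unfolding S_def by (intro divide_right_mono) auto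
    also have "\<dots> \<le> ((Cm p ?n + real (card (Inv ?n))) * (real (card (PP ?n) * (1 + 2*k + 2*k*(2*k)) * 3^k) * real N ^ k)) / real N ^ Suc k"
      using Bad_bound_real[OF k1 N] Np Cm_nonneg[of p ?n]
      by (intro divide_right_mono mult_left_mono) auto
    also have "\<dots> = C / real N" using N by (simp add: C_def field_simps)
    finally show ?thesis .
  qed
  have diff0: "(\<lambda>N. moment_N M X ?n N - (\<Sum>\<sigma>\<in>Inv ?n. r \<sigma> N)) \<longlonglongrightarrow> 0"
  proof (rule Lim_null_comparison)
    show "\<forall>\<^sub>F N in sequentially. norm (moment_N M X ?n N - (\<Sum>\<sigma>\<in>Inv ?n. r \<sigma> N)) \<le> C / real N"
      using diffb by (intro eventually_sequentiallyI[of 1]) auto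
    show "(\<lambda>N. C / real N) \<longlonglongrightarrow> 0" by (rule lim_const_over_n)
  qed
  have lim: "(\<lambda>N. moment_N M X ?n N) \<longlonglongrightarrow> L" by (rule Lim_transform[OF sumlim diff0])
  have le1: "lim (r \<sigma>) \<le> 1" if s: "\<sigma> \<in> Inv ?n" for \<sigma>
  proof (rule LIMSEQ_le_const2[OF conv[OF s]])
    show "\<exists>N. \<forall>m\<ge>N. r \<sigma> m \<le> 1"
    proof (intro exI allI impI)
      fix m :: nat assume m: "m \<ge> 1"
      have "real (card (H ?n \<sigma> m)) \<le> real m ^ Suc k"
        using card_H_le[OF s k1 m] by (metis of_nat_le_iff of_nat_power)
      then show "r \<sigma> m \<le> 1" using m by (simp add: r_def divide_le_eq_1)
    qed
  qed
  have s0: "sig0 ?n \<in> Inv ?n" by (rule sig0_Inv[OF assms(8)])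
  have le0: "lim (r (sig0 ?n)) \<le> 1 - 1/216"
  proof (rule LIMSEQ_le_const2[OF conv[OF s0]])
    show "\<exists>N. \<forall>m\<ge>N. r (sig0 ?n) m \<le> 1 - 1/216"
    proof (intro exI allI impI)
      fix m :: nat assume m: "m \<ge> 4"
      have "real (card (H ?n (sig0 ?n) m)) \<le> (1 - 1/216) * real m ^ Suc k" by (rule sig0_bound[OF assms(8) m])
      moreover have "real m ^ Suc k > 0" using m by simp
      ultimately show "r (sig0 ?n) m \<le> 1 - 1/216" by (simp add: r_def divide_le_eq)
    qed
  qed
  have "L = lim (r (sig0 ?n)) + (\<Sum>\<sigma>\<in>Inv ?n - {sig0 ?n}. lim (r \<sigma>))"
    unfolding L_def by (rule sum.remove[OF finite_Inv s0])
  also have "(\<Sum>\<sigma>\<in>Inv ?n - {sig0 ?n}. lim (r \<sigma>)) \<le> (\<Sum>\<sigma>\<in>Inv ?n - {sig0 ?n}. 1)"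
    by (rule sum_mono) (use le1 in auto)
  also have "(\<Sum>\<sigma>\<in>Inv ?n - {sig0 ?n}. (1::real)) = real (card (Inv ?n)) - 1"
    using s0 finite_Inv[of ?n] by (simp add: card_Diff_singleton of_nat_diff card_gt_0_iff[symmetric]) (metis One_nat_def Suc_leI card_gt_0_iff empty_iff of_nat_1 of_nat_diff)
  finally have "L \<le> lim (r (sig0 ?n)) + (real (card (Inv ?n)) - 1)" by simp
  then have "L < real (card (Inv ?n))" using le0 by simp
  also have "\<dots> \<le> real (odd_double_fact k)" using card_Inv_le[of k] by simp
  finally show ?thesis using lim by blast
qed


end
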